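(* For all $(a,b,c)\in\mathbb{C}^3$: (1) the sequence $\bigl(\{\cdot,\cdot\}^{[a,b,c]}_n\bigr)_{n\ge 0}$ is a formal deformation of $\widetilde J$; (2) $\{\widetilde J_{k,p},\widetilde J_{\ell,q}\}^{[a,b,c]}_n\subset \widetilde J_{k+\ell+2n,\,p+q}$ for all $k,\ell\in 2\mathbb{Z}$, $p,q\in\mathbb{Z}_{\ge0}$, $n\in\mathbb{Z}_{\ge0}$; (3) the subalgebra $\mathcal M_*$ is stable under every $\{\cdot,\cdot\}^{[a,b,c]}_n$, and for $f,g\in\mathcal M_*$ one has $\{f,g\}^{[a,b,c]}_n=\mathrm{SRC}_n(f,g)$ for all $n$.
   Context: Let $\widetilde J=\mathbb{C}[E_4,E_6,A,B]$ be the polynomial algebra in four algebraically independent variables, bigraded by weight and index, where $E_4$ has weight $4$ and index $0$, $E_6$ has weight $6$ and index $0$, $A$ has weight $-2$ and index $1$, $B$ has weight $0$ and index $1$; $\widetilde J_{k,p}$ denotes the homogeneous component of weight $k$ and index $p$ (elements of some $\widetilde J_{k,p}$ are called homogeneous). (This is the algebra of weak Jacobi forms of even weight on $\mathrm{SL}(2,\mathbb{Z})$, with $E_4,E_6$ the Eisenstein series and $A,B$ the standard generators of weight $-2$ and $0$ and index 1.) Let $\mathcal M_*=\mathbb{C}[E_4,E_6]$ (the index-$0$ part, the algebra of modular forms), with $\mathcal M_k$ its weight-$k$ part. The Serre derivation $S$ of $\mathcal M_*$ is the derivation with $S(E_4)=-\tfrac13E_6$, $S(E_6)=-\tfrac12E_4^2$.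 The Serre–Rankin–Cohen brackets are $\mathrm{SRC}_n(f,g)=\sum_{i=0}^n(-1)^i\binom{k+n-1}{n-i}\binom{\ell+n-1}{i}S^i(f)S^{n-i}(g)$ for $f\in\mathcal M_k,g\in\mathcal M_\ell$, extended bilinearly. For $(a,b)\in\mathbb{C}^2$, $S_{a,b}$ is the derivation of $\widetilde J$ with $S_{a,b}(E_4)=-\tfrac13E_6$, $S_{a,b}(E_6)=-\tfrac12E_4^2$, $S_{a,b}(A)=aB$, $S_{a,b}(B)=bE_4A$. For $c\in\mathbb{C}$ and $n\ge0$, $\{\cdot,\cdot\}^{[a,b,c]}_n$ is the bilinear map $\widetilde J\times\widetilde J\to\widetilde J$ defined on homogeneous $f\in\widetilde J_{k,p}$, $g\in\widetilde J_{\ell,q}$ by $\{f,g\}^{[a,b,c]}_n=\sum_{r=0}^n(-1)^r\binom{k+cp+n-1}{n-r}\binom{\ell+cq+n-1}{r}S_{a,b}^r(f)\,S_{a,b}^{n-r}(g)$, where $\binom{x}{m}=x(x-1)\cdots(x-m+1)/m!$ for complex $x$. A formal deformation of a commutative $\mathbb{C}$-algebra $R$ is a sequence $(\mu_j)_{j\ge0}$ of bilinear maps $R\times R\to R$ with $\mu_0$ the product of $R$ such that for all $n\ge0$ and $f,g,h\in R$: $\sum_{r=0}^n\mu_{n-r}(\mu_r(f,g),h)=\sum_{r=0}^n\mu_{n-r}(f,\mu_r(g,h))$ (i.e. $f\star g=\sum_j\mu_j(f,g)\hbar^j$ is an associative product on $R[[\hbar]]$). *)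

theory Defs
  imports Complex_Main "HOL-Library.Poly_Mapping" "HOL-Library.Product_Plus"
begin

text \<open>Exponent vectors (i,j,k,l) stand for the monomial E4^i E6^j A^k B^l.
  The algebra J~ = C[E4,E6,A,B] is the type of finitely supported maps from
  exponent vectors to complex coefficients with convolution product.\<close>

type_synonym mono = "nat \<times> nat \<times> nat \<times> nat"
type_synonym jac = "mono \<Rightarrow>\<^sub>0 complex"

definition cst :: "complex \<Rightarrow> jac" where
  "cst z = Poly_Mapping.single (0,0,0,0) z"

definition E4 :: jac where "E4 = Poly_Mapping.single (1,0,0,0) 1"
definition E6 :: jac where "E6 = Poly_Mapping.single (0,1,0,0) 1"
definition Aj :: jac where "Aj = Poly_Mapping.single (0,0,1,0) 1"
definition Bj :: jac where "Bj = Poly_Mapping.single (0,0,0,1) 1"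

fun wt :: "mono \<Rightarrow> int" where
  "wt (i,j,k,l) = 4 * int i + 6 * int j - 2 * int k"
fun idx :: "mono \<Rightarrow> nat" where
  "idx (i,j,k,l) = k + l"

definition Jhom :: "int \<Rightarrow> nat \<Rightarrow> jac set" where
  "Jhom k p = {f. \<forall>m\<in>Poly_Mapping.keys f. wt m = k \<and> idx m = p}"

definition Mstar :: "jac set" where
  "Mstar = {f. \<forall>m\<in>Poly_Mapping.keys f. (case m of (i,j,k,l) \<Rightarrow> k = 0 \<and> l = 0)}"

definition pdE4 :: "jac \<Rightarrow> jac" where
  "pdE4 f = (\<Sum>m\<in>Poly_Mapping.keys f. case m of (i,j,k,l) \<Rightarrow>
      Poly_Mapping.single (i - 1, j, k, l) (of_nat i * Poly_Mapping.lookup f m))"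
definition pdE6 :: "jac \<Rightarrow> jac" where
  "pdE6 f = (\<Sum>m\<in>Poly_Mapping.keys f. case m of (i,j,k,l) \<Rightarrow>
      Poly_Mapping.single (i, j - 1, k, l) (of_nat j * Poly_Mapping.lookup f m))"
definition pdA :: "jac \<Rightarrow> jac" where
  "pdA f = (\<Sum>m\<in>Poly_Mapping.keys f. case m of (i,j,k,l) \<Rightarrow>
      Poly_Mapping.single (i, j, k - 1, l) (of_nat k * Poly_Mapping.lookup f m))"
definition pdB :: "jac \<Rightarrow> jac" where
  "pdB f = (\<Sum>m\<in>Poly_Mapping.keys f. case m of (i,j,k,l) \<Rightarrow>
      Poly_Mapping.single (i, j, k, l - 1) (of_nat l * Poly_Mapping.lookup f m))"

text \<open>The derivation S_{a,b}: the unique derivation with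
  E4 -> -E6/3, E6 -> -E4^2/2, A -> aB, B -> b E4 A (chain rule form).\<close>
definition Sab :: "complex \<Rightarrow> complex \<Rightarrow> jac \<Rightarrow> jac" where
  "Sab a b f = cst (-1/3) * E6 * pdE4 f + cst (-1/2) * E4^2 * pdE6 f
              + cst a * Bj * pdA f + cst b * E4 * Aj * pdB f"

definition serre :: "jac \<Rightarrow> jac" where
  "serre f = cst (-1/3) * E6 * pdE4 f + cst (-1/2) * E4^2 * pdE6 f"

definition comp :: "jac \<Rightarrow> int \<Rightarrow> nat \<Rightarrow> jac" where
  "comp f k p = (\<Sum>m\<in>{m\<in>Poly_Mapping.keys f. wt m = k \<and> idx m = p}. Poly_Mapping.single m (Poly_Mapping.lookup f m))"

definition degs :: "jac \<Rightarrow> (int \<times> nat) set" where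
  "degs f = (\<lambda>m. (wt m, idx m)) ` Poly_Mapping.keys f"

definition bhom :: "complex \<Rightarrow> complex \<Rightarrow> complex \<Rightarrow> nat \<Rightarrow>
    int \<Rightarrow> nat \<Rightarrow> jac \<Rightarrow> int \<Rightarrow> nat \<Rightarrow> jac \<Rightarrow> jac" where
  "bhom a b c n k p f l q g =
     (\<Sum>r=0..n. cst ((-1)^r
        * ((of_int k + c * of_nat p + of_nat n - 1) gchoose (n - r))
        * ((of_int l + c * of_nat q + of_nat n - 1) gchoose r))
        * ((Sab a b ^^ r) f * (Sab a b ^^ (n - r)) g))"

definition bracket :: "complex \<Rightarrow> complex \<Rightarrow> complex \<Rightarrow> nat \<Rightarrow> jac \<Rightarrow> jac \<Rightarrow> jac" where
  "bracket a b c n f g =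
     (\<Sum>(k,p)\<in>degs f. \<Sum>(l,q)\<in>degs g. bhom a b c n k p (comp f k p) l q (comp g l q))"

definition src_hom :: "nat \<Rightarrow> int \<Rightarrow> jac \<Rightarrow> int \<Rightarrow> jac \<Rightarrow> jac" where
  "src_hom n k f l g =
     (\<Sum>i=0..n. cst ((-1)^i
        * ((of_int k + of_nat n - 1) gchoose (n - i))
        * ((of_int l + of_nat n - 1) gchoose i))
        * ((serre ^^ i) f * (serre ^^ (n - i)) g))"

definition wts :: "jac \<Rightarrow> int set" where
  "wts f = wt ` Poly_Mapping.keys f"

definition wcomp :: "jac \<Rightarrow> int \<Rightarrow> jac" where
  "wcomp f k = (\<Sum>m\<in>{m\<in>Poly_Mapping.keys f. wt m = k}. Poly_Mapping.single m (Poly_Mapping.lookup f m))"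

definition SRC :: "nat \<Rightarrow> jac \<Rightarrow> jac \<Rightarrow> jac" where
  "SRC n f g = (\<Sum>k\<in>wts f. \<Sum>l\<in>wts g. src_hom n k (wcomp f k) l (wcomp g l))"

definition formal_deformation :: "(nat \<Rightarrow> jac \<Rightarrow> jac \<Rightarrow> jac) \<Rightarrow> bool" where
  "formal_deformation \<mu> \<longleftrightarrow>
     (\<forall>f g. \<mu> 0 f g = f * g) \<and>
     (\<forall>n f g h. (\<Sum>r=0..n. \<mu> (n - r) (\<mu> r f g) h) = (\<Sum>r=0..n. \<mu> (n - r) f (\<mu> r g h)))"

end

theory Submission
  imports Defs "HOL-Computational_Algebra.Polynomial"
begin


section \<open>Generic iterated graded derivations\<close>

fun Ep :: "(complex \<Rightarrow> 'b \<Rightarrow> 'b) \<Rightarrow> complex \<Rightarrow> nat \<Rightarrow> 'b \<Rightarrow> 'b" where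
  "Ep E d 0 p = p"
| "Ep E d (Suc n) p = E (d - of_nat n) (Ep E d n p)"

lemma pascal_sum:
  fixes F :: "nat \<Rightarrow> 'b::comm_semiring_1"
  shows "(\<Sum>b\<le>n. of_nat (n choose b) * F (Suc b)) + (\<Sum>b\<le>n. of_nat (n choose b) * F b)
       = (\<Sum>b\<le>Suc n. of_nat (Suc n choose b) * F b)"
proof -
  have e1: "(\<Sum>b\<le>Suc n. of_nat (Suc n choose b) * F b)
      = F 0 + (\<Sum>b\<le>n. of_nat (Suc n choose Suc b) * F (Suc b))"
    by (subst sum.atMost_Suc_shift) simp
  have e2: "(\<Sum>b\<le>n. of_nat (n choose b) * F b) = (\<Sum>b\<le>Suc n. of_nat (n choose b) * F b)"
    by (simp add: binomial_eq_0)
  have e3: "(\<Sum>b\<le>Suc n. of_nat (n choose b) * F b) = F 0 + (\<Sum>b\<le>n. of_nat (n choose Suc b) * F (Suc b))"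
    by (subst sum.atMost_Suc_shift) simp
  show ?thesis unfolding e1 e2 e3
    by (simp add: sum.distrib algebra_simps)
qed

lemma Ep_Leibniz:
  fixes E :: "complex \<Rightarrow> 'b::comm_ring_1 \<Rightarrow> 'b"
  assumes add: "\<And>x p q. E x (p + q) = E x p + E x q"
    and lb: "\<And>d e p q. E (d + e) (p * q) = E d p * q + p * E e q"
  shows "Ep E (d + e) n (p * q) = (\<Sum>b\<le>n. of_nat (n choose b) * (Ep E d b p * Ep E e (n - b) q))"
proof (induction n)
  case 0
  then show ?case by simp
next
  case (Suc n)
  have z: "E x 0 = 0" for x using add[of x 0 0] by simp
  have sm: "E x (sum g S) = sum (\<lambda>i. E x (g i)) S" for x g and S :: "nat set"
    by (induction S rule: infinite_finite_induct) (auto simp: z add)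
  have nat: "E x (of_nat k * p) = of_nat k * E x p" for x k p
    by (induction k) (auto simp: z add algebra_simps)
  have "Ep E (d + e) (Suc n) (p * q) = E (d + e - of_nat n) (\<Sum>b\<le>n. of_nat (n choose b) * (Ep E d b p * Ep E e (n - b) q))"
    by (simp add: Suc.IH)
  also have "\<dots> = (\<Sum>b\<le>n. of_nat (n choose b) * E (d + e - of_nat n) (Ep E d b p * Ep E e (n - b) q))"
    by (simp add: sm nat)
  also have "\<dots> = (\<Sum>b\<le>n. of_nat (n choose b) * (Ep E d (Suc b) p * Ep E e (Suc n - Suc b) q)
          + of_nat (n choose b) * (Ep E d b p * Ep E e (Suc n - b) q))"
  proof (rule sum.cong[OF refl])
    fix b assume "b \<in> {..n}"
    then have bn: "b \<le> n" by simp
    have dd: "d + e - of_nat n = (d - of_nat b) + (e - of_nat (n - b))"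
      using bn by (simp add: of_nat_diff)
    have "Suc n - b = Suc (n - b)" using bn by simp
    then show "of_nat (n choose b) * E (d + e - of_nat n) (Ep E d b p * Ep E e (n - b) q) =
      of_nat (n choose b) * (Ep E d (Suc b) p * Ep E e (Suc n - Suc b) q)
          + of_nat (n choose b) * (Ep E d b p * Ep E e (Suc n - b) q)"
      unfolding dd lb by (simp add: algebra_simps)
  qed
  also have "\<dots> = (\<Sum>b\<le>Suc n. of_nat (Suc n choose b) * (Ep E d b p * Ep E e (Suc n - b) q))"
    using pascal_sum[of n "\<lambda>b. Ep E d b p * Ep E e (Suc n - b) q"]
    by (simp add: sum.distrib)
  finally show ?case .
qed

section \<open>Formal derivative without no-zero-divisor assumption\<close>

definition pdu :: "'a::comm_ring_1 poly \<Rightarrow> 'a poly" where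
  "pdu p = (\<Sum>i\<le>degree p. monom (of_nat (Suc i) * coeff p (Suc i)) i)"

lemma coeff_pdu: "coeff (pdu p) n = of_nat (Suc n) * coeff p (Suc n)"
proof -
  have "coeff (pdu p) n = (\<Sum>i\<le>degree p. if i = n then of_nat (Suc i) * coeff p (Suc i) else 0)"
    unfolding pdu_def by (simp add: coeff_sum coeff_monom)
  also have "\<dots> = (if n \<le> degree p then of_nat (Suc n) * coeff p (Suc n) else 0)"
    by (simp add: sum.delta)
  also have "\<dots> = of_nat (Suc n) * coeff p (Suc n)"
    by (auto simp: coeff_eq_0)
  finally show ?thesis .
qed

lemma pdu_add: "pdu (p + q) = pdu p + pdu q"
  by (rule poly_eqI) (simp add: coeff_pdu algebra_simps)
lemma pdu_smult: "pdu (smult a p) = smult a (pdu p)"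
  by (rule poly_eqI) (simp add: coeff_pdu algebra_simps)
lemma pdu_pCons: "pdu (pCons a p) = p + pCons 0 (pdu p)"
  by (rule poly_eqI) (simp add: coeff_pdu coeff_pCons algebra_simps split: nat.split)
lemma pdu_zero [simp]: "pdu 0 = 0"
  by (rule poly_eqI) (simp add: coeff_pdu)
lemma pdu_mult: "pdu (p * q) = p * pdu q + q * pdu p"
  by (induct p) (auto simp: pdu_add pdu_smult pdu_pCons algebra_simps)
lemma pdu_const [simp]: "pdu [:a:] = 0"
  by (simp add: pdu_pCons)

section \<open>Derivation algebras\<close>

locale dalg =
  fixes sc :: "complex \<Rightarrow> 'a::comm_ring_1" and D :: "'a \<Rightarrow> 'a"
  assumes sc_add: "sc (x + y) = sc x + sc y"
    and sc_mult: "sc (x * y) = sc x * sc y"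
    and sc_one: "sc 1 = 1"
    and D_add: "D (f + g) = D f + D g"
    and D_mult: "D (f * g) = D f * g + f * D g"
    and D_sc: "D (sc c) = 0"
begin

lemma sc_zero [simp]: "sc 0 = 0"
  using sc_add[of 0 0] by simp
lemma sc_uminus: "sc (- x) = - sc x"
proof -
  have "sc x + sc (-x) = 0" using sc_add[of x "-x"] by simp
  from minus_unique[OF this] show ?thesis by simp
qed
lemma sc_diff: "sc (x - y) = sc x - sc y"
  using sc_add[of x "-y"] by (simp add: sc_uminus)
lemma sc_of_nat [simp]: "sc (of_nat n) = of_nat n"
  by (induction n) (simp_all add: sc_add sc_one)
lemma sc_sum: "sc (sum g S) = sum (\<lambda>i. sc (g i)) S"
  by (induction S rule: infinite_finite_induct) (auto simp: sc_add)
lemma sc_pow: "sc (x ^ n) = sc x ^ n"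
  by (induction n) (auto simp: sc_mult sc_one)
lemma sc_inv: "x \<noteq> 0 \<Longrightarrow> sc (1 / x) * sc x = 1"
  by (simp add: sc_mult[symmetric] sc_one)

lemma D_zero [simp]: "D 0 = 0"
  using D_add[of 0 0] by simp
lemma D_one [simp]: "D 1 = 0"
  using D_sc[of 1] by (simp add: sc_one)
lemma D_uminus: "D (- f) = - D f"
proof -
  have "D f + D (-f) = 0" using D_add[of f "-f"] by simp
  from minus_unique[OF this] show ?thesis by simp
qed
lemma D_diff: "D (f - g) = D f - D g"
  using D_add[of f "-g"] by (simp add: D_uminus)
lemma D_scm: "D (sc c * f) = sc c * D f"
  by (simp add: D_mult D_sc)
lemma D_sum: "D (sum g S) = sum (\<lambda>i. D (g i)) S"
  by (induction S rule: infinite_finite_induct) (auto simp: D_add)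
lemma D_of_nat_mult: "D (of_nat k * f) = of_nat k * D f"
  using D_scm[of "of_nat k" f] by simp

lemma Dn_add: "(D ^^ r) (f + g) = (D ^^ r) f + (D ^^ r) g"
  by (induction r) (auto simp: D_add)
lemma Dn_zero [simp]: "(D ^^ r) 0 = 0"
  by (induction r) auto
lemma Dn_scm: "(D ^^ r) (sc c * f) = sc c * (D ^^ r) f"
  by (induction r) (auto simp: D_scm)
lemma Dn_sum: "(D ^^ r) (sum g S) = sum (\<lambda>i. (D ^^ r) (g i)) S"
  by (induction S rule: infinite_finite_induct) (auto simp: Dn_add)
lemma Dn_uminus: "(D ^^ r) (- f) = - (D ^^ r) f"
  by (induction r) (auto simp: D_uminus)

definition B :: "nat \<Rightarrow> complex \<Rightarrow> 'a \<Rightarrow> complex \<Rightarrow> 'a \<Rightarrow> 'a" where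
  "B n x f y g = (\<Sum>r=0..n. sc ((-1)^r * ((x + of_nat n - 1) gchoose (n - r))
        * ((y + of_nat n - 1) gchoose r)) * ((D ^^ r) f * (D ^^ (n - r)) g))"

definition Dh :: "'a poly \<Rightarrow> 'a poly" where
  "Dh p = map_poly D p"

lemma coeff_Dh: "coeff (Dh p) n = D (coeff p n)"
  unfolding Dh_def by (simp add: coeff_map_poly)

lemma Dh_add: "Dh (p + q) = Dh p + Dh q"
  by (rule poly_eqI) (simp add: coeff_Dh D_add)

lemma Dh_mult: "Dh (p * q) = Dh p * q + p * Dh q"
  by (rule poly_eqI) (simp add: coeff_Dh coeff_mult D_sum D_mult sum.distrib)

lemma Dh_const [simp]: "Dh [:f:] = [:D f:]"
  by (rule poly_eqI) (simp add: coeff_Dh coeff_pCons split: nat.split)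

lemma Dh_X [simp]: "Dh [:0, 1:] = 0"
  by (rule poly_eqI) (simp add: coeff_Dh coeff_pCons split: nat.split)

lemma Dh_pdu: "Dh (pdu p) = pdu (Dh p)"
  by (rule poly_eqI) (simp add: coeff_Dh coeff_pdu D_of_nat_mult del: of_nat_Suc)

definition Dt :: "'a poly \<Rightarrow> 'a poly" where
  "Dt p = Dh p + pdu p"

lemma Dt_add: "Dt (p + q) = Dt p + Dt q"
  by (simp add: Dt_def Dh_add pdu_add)
lemma Dt_mult: "Dt (p * q) = Dt p * q + p * Dt q"
  by (simp add: Dt_def Dh_mult pdu_mult algebra_simps)
lemma Dt_const [simp]: "Dt [:f:] = [:D f:]"
  by (simp add: Dt_def)
lemma Dt_X [simp]: "Dt [:0, 1:] = 1"
  by (simp add: Dt_def pdu_pCons)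
lemma Dt_pdu: "Dt (pdu p) = pdu (Dt p)"
  by (simp add: Dt_def Dh_pdu pdu_add)
lemma Dt_zero [simp]: "Dt 0 = 0"
  using Dt_add[of 0 0] by simp

definition Qd :: "complex \<Rightarrow> 'a poly \<Rightarrow> 'a poly" where
  "Qd d p = smult (sc d) p - [:0, 1:] * Dt p"

lemma Qd_add: "Qd d (p + q) = Qd d p + Qd d q"
  by (simp add: Qd_def Dt_add smult_add_right algebra_simps)
lemma Qd_mult: "Qd (d + e) (p * q) = Qd d p * q + p * Qd e q"
  by (simp add: Qd_def Dt_mult sc_add smult_add_left algebra_simps)



lemma Dt_smult: "Dt (smult (sc c) p) = smult (sc c) (Dt p)"
  using Dt_mult[of "[:sc c:]" p] by (simp add: D_sc)
lemma Dt_uminus: "Dt (- p) = - Dt p"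
proof -
  have "Dt p + Dt (-p) = 0" using Dt_add[of p "-p"] by simp
  from minus_unique[OF this] show ?thesis by simp
qed
lemma Dt_diff: "Dt (p - q) = Dt p - Dt q"
  using Dt_add[of p "-q"] by (simp add: Dt_uminus)

lemma Dt_pCons0 [simp]: "Dt (pCons 0 q) = q + pCons 0 (Dt q)"
proof -
  have "pCons 0 q = [:0, 1:] * q" by simp
  then show ?thesis by (simp only: Dt_mult) simp
qed
lemma Dt_Qd: "Dt (Qd d p) = Qd (d - 1) (Dt p)"
proof -
  have "Dt (smult (sc d) p) = smult (sc d) (Dt p)"
    using Dt_mult[of "[:sc d:]" p] by (simp add: D_sc)
  then show ?thesis
    by (simp add: Qd_def Dt_mult Dt_diff Dt_smult sc_diff sc_one D_sc smult_diff_left algebra_simps)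
qed
lemma Dtn_const: "(Dt ^^ a) [:f:] = [:(D ^^ a) f:]"
  by (induction a) auto
lemma Dtn_pdu: "(Dt ^^ a) (pdu p) = pdu ((Dt ^^ a) p)"
  by (induction a) (auto simp: Dt_pdu)
lemma Dtn_add: "(Dt ^^ a) (p + q) = (Dt ^^ a) p + (Dt ^^ a) q"
  by (induction a) (auto simp: Dt_add)
lemma Dtn_zero [simp]: "(Dt ^^ a) 0 = 0"
  by (induction a) auto
lemma Dtn_smult: "(Dt ^^ a) (smult (sc c) p) = smult (sc c) ((Dt ^^ a) p)"
  by (induction a) (auto simp: Dt_smult)

lemma Qd_zero [simp]: "Qd d 0 = 0"
  by (simp add: Qd_def)
lemma Qd_uminus: "Qd d (- p) = - Qd d p"
proof -
  have "Qd d p + Qd d (-p) = 0" using Qd_add[of d p "-p"] by simp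
  from minus_unique[OF this] show ?thesis by simp
qed
lemma Qd_diff: "Qd d (p - q) = Qd d p - Qd d q"
  using Qd_add[of d p "-q"] by (simp add: Qd_uminus)
lemma Qd_of_nat: "Qd d (of_nat k * p) = of_nat k * Qd d p"
  by (induction k) (auto simp: Qd_add algebra_simps)
lemma Qd_smult: "Qd d (smult (sc c) p) = smult (sc c) (Qd d p)"
  unfolding Qd_def Dt_smult by (simp add: smult_diff_right mult.commute)
lemma pdu_Dt: "pdu (Dt p) = Dt (pdu p)"
  by (simp add: Dt_pdu)
lemma pdu_diff: "pdu (p - q) = pdu p - pdu q"
  by (rule poly_eqI) (simp add: coeff_pdu algebra_simps)
lemma pdu_X: "pdu [:0, 1:] = 1"
  by (simp add: pdu_pCons)
lemma pdu_Qd: "pdu (Qd d p) = Qd d (pdu p) - Dt p"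
proof -
  have "pdu ([:0, 1:] * Dt p) = [:0, 1:] * Dt (pdu p) + Dt p"
    by (simp only: pdu_mult pdu_X pdu_Dt) simp
  then show ?thesis
    unfolding Qd_def pdu_diff pdu_smult by simp
qed
lemma poly_Qd_0: "poly (Qd d p) 0 = sc d * poly p 0"
  by (simp add: Qd_def)

abbreviation Qp :: "complex \<Rightarrow> nat \<Rightarrow> 'a poly \<Rightarrow> 'a poly" where
  "Qp \<equiv> Ep Qd"

lemma Qp_add: "Qp d b (p + q) = Qp d b p + Qp d b q"
  by (induction b) (auto simp: Qd_add)
lemma Qp_zero [simp]: "Qp d b 0 = 0"
  by (induction b) auto
lemma Qp_uminus: "Qp d b (- p) = - Qp d b p"
  by (induction b) (auto simp: Qd_uminus)
lemma Qp_diff: "Qp d b (p - q) = Qp d b p - Qp d b q"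
  by (induction b) (auto simp: Qd_diff)
lemma Qp_of_nat: "Qp d b (of_nat k * p) = of_nat k * Qp d b p"
  by (induction b) (auto simp: Qd_of_nat)
lemma Qp_smult: "Qp d b (smult (sc c) p) = smult (sc c) (Qp d b p)"
  by (induction b) (auto simp: Qd_smult)
lemma Qp_sum: "Qp d b (sum g S) = sum (\<lambda>i. Qp d b (g i)) S"
  by (induction S rule: infinite_finite_induct) (auto simp: Qp_add)

lemma Dt_Qp: "Dt (Qp d b p) = Qp (d - 1) b (Dt p)"
  by (induction b) (auto simp: Dt_Qd algebra_simps)
lemma Dtn_Qp: "(Dt ^^ a) (Qp d b p) = Qp (d - of_nat a) b ((Dt ^^ a) p)"
  by (induction a) (auto simp: Dt_Qp algebra_simps)
lemma Qp_Qp: "Qp (d - of_nat b') b (Qp d b' p) = Qp d (b + b') p"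
  by (induction b) (auto simp: algebra_simps)

lemma pdu_Qp_Suc: "pdu (Qp d (Suc b) p) = Qp d (Suc b) (pdu p) - of_nat (Suc b) * Qp (d - 1) b (Dt p)"
proof (induction b)
  case 0
  then show ?case by (simp add: pdu_Qd)
next
  case (Suc b)
  have "pdu (Qp d (Suc (Suc b)) p) = Qd (d - of_nat (Suc b)) (pdu (Qp d (Suc b) p)) - Dt (Qp d (Suc b) p)"
    by (simp only: Ep.simps pdu_Qd)
  also have "\<dots> = Qd (d - of_nat (Suc b)) (Qp d (Suc b) (pdu p))
      - of_nat (Suc b) * Qd (d - of_nat (Suc b)) (Qp (d - 1) b (Dt p)) - Qp (d - 1) (Suc b) (Dt p)"
    by (simp only: Suc.IH Qd_diff Qd_of_nat Dt_Qp)
  also have "Qd (d - of_nat (Suc b)) (Qp (d - 1) b (Dt p)) = Qp (d - 1) (Suc b) (Dt p)"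
    by (simp add: algebra_simps)
  also have "Qd (d - of_nat (Suc b)) (Qp d (Suc b) (pdu p)) = Qp d (Suc (Suc b)) (pdu p)"
    by simp
  finally show ?case by (simp add: algebra_simps)
qed

lemma pdu_Qp: "pdu (Qp d b p) = Qp d b (pdu p) - of_nat b * Qp (d - 1) (b - 1) (Dt p)"
  by (cases b) (simp_all only: pdu_Qp_Suc, simp_all)

lemma poly_Qp_0: "poly (Qp d b p) 0 = sc (\<Prod>i=0..<b. d - of_nat i) * poly p 0"
proof (induction b)
  case 0
  then show ?case by (simp add: sc_one)
next
  case (Suc b)
  have "poly (Qp d (Suc b) p) 0 = sc (d - of_nat b) * (sc (\<Prod>i=0..<b. d - of_nat i) * poly p 0)"
    by (simp only: Ep.simps poly_Qd_0 Suc.IH)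
  also have "\<dots> = sc (\<Prod>i=0..<Suc b. d - of_nat i) * poly p 0"
    by (simp only: prod.atLeast0_lessThan_Suc sc_mult ac_simps)
  finally show ?case .
qed

lemma Ep_const: "Ep (\<lambda>_. E) d n p = (E ^^ n) p"
  by (induction n) auto

definition op :: "complex \<Rightarrow> nat \<Rightarrow> nat \<Rightarrow> 'a poly \<Rightarrow> 'a poly" where
  "op d a b p = Qp (d - of_nat a) b ((Dt ^^ a) p)"

lemma op_add: "op d a b (p + q) = op d a b p + op d a b q"
  by (simp add: op_def Dtn_add Qp_add)
lemma op_zero [simp]: "op d a b 0 = 0"
  by (simp add: op_def)
lemma op_smult: "op d a b (smult (sc c) p) = smult (sc c) (op d a b p)"
  by (simp add: op_def Dtn_smult Qp_smult)
lemma op_sum: "op d a b (sum g S) = sum (\<lambda>i. op d a b (g i)) S"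
  by (induction S rule: infinite_finite_induct) (auto simp: op_add)
lemma op_of_nat: "op d a b (of_nat k * p) = of_nat k * op d a b p"
  by (induction k) (auto simp: op_add algebra_simps)

lemma op_op: "op (d - of_nat a' - of_nat b') a b (op d a' b' p) = op d (a + a') (b + b') p"
proof -
  have "op (d - of_nat a' - of_nat b') a b (op d a' b' p)
      = Qp (d - of_nat a' - of_nat b' - of_nat a) b (Qp (d - of_nat a' - of_nat a) b' ((Dt ^^ a) ((Dt ^^ a') p)))"
    by (simp add: op_def Dtn_Qp algebra_simps)
  also have "\<dots> = Qp (d - of_nat a' - of_nat a) (b + b') ((Dt ^^ a) ((Dt ^^ a') p))"
    using Qp_Qp[of "d - of_nat a' - of_nat a" b' b] by (simp add: algebra_simps)
  also have "\<dots> = op d (a + a') (b + b') p"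
    by (simp add: op_def funpow_add algebra_simps)
  finally show ?thesis .
qed

lemma Dtn_Leibniz: "(Dt ^^ n) (p * q) = (\<Sum>b\<le>n. of_nat (n choose b) * ((Dt ^^ b) p * (Dt ^^ (n - b)) q))"
  using Ep_Leibniz[of "\<lambda>_. Dt" 0 0 n p q] by (simp add: Ep_const Dt_add Dt_mult)

lemma Qp_Leibniz: "Qp (d + e) n (p * q) = (\<Sum>b\<le>n. of_nat (n choose b) * (Qp d b p * Qp e (n - b) q))"
  by (rule Ep_Leibniz) (auto simp: Qd_add Qd_mult)

lemma op_Leibniz:
  "op (d + e) Ap Bp (p * q) = (\<Sum>a\<le>Ap. \<Sum>b\<le>Bp. of_nat (Ap choose a) * of_nat (Bp choose b)
      * (op d a b p * op e (Ap - a) (Bp - b) q))"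
proof -
  have "op (d + e) Ap Bp (p * q) = (\<Sum>a\<le>Ap. of_nat (Ap choose a) *
      Qp (d + e - of_nat Ap) Bp ((Dt ^^ a) p * (Dt ^^ (Ap - a)) q))"
    by (simp add: op_def Dtn_Leibniz Qp_sum Qp_of_nat)
  also have "\<dots> = (\<Sum>a\<le>Ap. \<Sum>b\<le>Bp. of_nat (Ap choose a) * of_nat (Bp choose b)
      * (op d a b p * op e (Ap - a) (Bp - b) q))"
  proof (rule sum.cong[OF refl])
    fix a assume "a \<in> {..Ap}"
    then have aA: "a \<le> Ap" by simp
    have eq: "d + e - of_nat Ap = (d - of_nat a) + (e - of_nat (Ap - a))"
      using aA by (simp add: of_nat_diff)
    show "of_nat (Ap choose a) * Qp (d + e - of_nat Ap) Bp ((Dt ^^ a) p * (Dt ^^ (Ap - a)) q)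
      = (\<Sum>b\<le>Bp. of_nat (Ap choose a) * of_nat (Bp choose b) * (op d a b p * op e (Ap - a) (Bp - b) q))"
      by (simp only: eq Qp_Leibniz op_def sum_distrib_left mult.assoc)
  qed
  finally show ?thesis .
qed

lemma pdu_op: "pdu (op d a b p) = op d a b (pdu p) - of_nat b * op d (Suc a) (b - 1) p"
  by (simp only: op_def pdu_Qp Dtn_pdu[symmetric] funpow.simps o_def) (simp add: algebra_simps)

lemma poly_op_const: "poly (op d a b [:f:]) 0 = sc (\<Prod>i=0..<b. d - of_nat a - of_nat i) * (D ^^ a) f"
  by (simp add: op_def poly_Qp_0 Dtn_const)


lemma tele:
  fixes G :: "nat \<Rightarrow> 'b::comm_ring_1"
  shows "(\<Sum>i\<le>k. (-1)^i * of_nat (k choose i) * (of_nat (k - i) * G (Suc i)))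
       + (\<Sum>i\<le>k. (-1)^i * of_nat (k choose i) * (of_nat i * G i)) = 0"
proof -
  define H where "H j = (-1)^j * of_nat (j * (k choose j)) * G j" for j
  have kc: "(k - i) * (k choose i) = Suc i * (k choose Suc i)" for i
    by (simp only: binomial_absorb_comp binomial_absorption)
  have 1: "(\<Sum>i\<le>k. (-1)^i * of_nat (k choose i) * (of_nat (k - i) * G (Suc i))) = - (\<Sum>i\<le>k. H (Suc i))"
    unfolding H_def sum_negf[symmetric]
  proof (rule sum.cong[OF refl])
    fix i
    have e: "(of_nat (k - i) * of_nat (k choose i) :: 'b) = of_nat (Suc i * (k choose Suc i))"
      using kc[of i] by (metis of_nat_mult)
    show "(-1)^i * of_nat (k choose i) * (of_nat (k - i) * G (Suc i)) = - ((-1) ^ Suc i * of_nat (Suc i * (k choose Suc i)) * G (Suc i))"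
      by (simp only: power_Suc e[symmetric]) (simp add: algebra_simps)
  qed
  have 2: "(\<Sum>i\<le>k. (-1)^i * of_nat (k choose i) * (of_nat i * G i)) = (\<Sum>i\<le>k. H i)"
    unfolding H_def by (rule sum.cong) (simp_all add: algebra_simps)
  have "(\<Sum>i\<le>Suc k. H i) = H 0 + (\<Sum>i\<le>k. H (Suc i))"
    by (rule sum.atMost_Suc_shift)
  moreover have "(\<Sum>i\<le>Suc k. H i) = (\<Sum>i\<le>k. H i) + H (Suc k)"
    by simp
  moreover have "H 0 = 0" "H (Suc k) = 0"
    by (simp_all add: H_def binomial_eq_0)
  ultimately show ?thesis unfolding 1 2 by simp
qed

definition M :: "nat \<Rightarrow> complex \<Rightarrow> 'a poly \<Rightarrow> complex \<Rightarrow> 'a poly \<Rightarrow> 'a poly" where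
  "M k d p e q = (\<Sum>i\<le>k. (-1)^i * of_nat (k choose i) * (op d (k - i) i p * op e i (k - i) q))"

lemma pdu_sgn: "pdu ((-1)^i * of_nat m * X) = (-1)^i * of_nat m * pdu (X :: 'a poly)"
proof -
  have "((-1)^i * of_nat m :: 'a poly) = [:(-1)^i * of_nat m:]"
    by (induction i) (simp_all add: of_nat_poly)
  then show ?thesis by (simp add: pdu_mult pdu_smult)
qed

lemma pdu_sum: "pdu (sum g S) = sum (\<lambda>i. pdu (g i)) S"
  by (induction S rule: infinite_finite_induct) (auto simp: pdu_add)

lemma pdu_op_const: "pdu (op d a b [:f:]) = - (of_nat b * op d (Suc a) (b - 1) [:f:])"
  by (simp add: pdu_op)

lemma pdu_M_const: "pdu (M k d [:f:] e [:g:]) = 0"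
proof -
  define G where "G j = op d (Suc (k - j)) (j - 1) [:f:] * op e j (k - j) [:g:]" for j
  have "pdu (M k d [:f:] e [:g:]) = (\<Sum>i\<le>k. (-1)^i * of_nat (k choose i) *
     pdu (op d (k - i) i [:f:] * op e i (k - i) [:g:]))"
    unfolding M_def pdu_sum pdu_sgn ..
  also have "\<dots> = - ((\<Sum>i\<le>k. (-1)^i * of_nat (k choose i) * (of_nat (k - i) * G (Suc i)))
       + (\<Sum>i\<le>k. (-1)^i * of_nat (k choose i) * (of_nat i * G i)))"
    unfolding sum.distrib[symmetric] sum_negf[symmetric]
  proof (rule sum.cong[OF refl])
    fix i assume "i \<in> {..k}"
    then have ik: "i \<le> k" by simp
    have g1: "of_nat (k - i) * G (Suc i) = of_nat (k - i) * (op d (k - i) i [:f:] * op e (Suc i) (k - Suc i) [:g:])"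
    proof (cases "i = k")
      case True then show ?thesis by simp
    next
      case False
      then have h: "Suc (k - Suc i) = k - i" using ik by auto
      show ?thesis unfolding G_def h diff_Suc_1 ..
    qed
    have g2: "G i = op d (k - i + 1) (i - 1) [:f:] * op e i (k - i) [:g:]"
      unfolding G_def by simp
    show "(-1)^i * of_nat (k choose i) * pdu (op d (k - i) i [:f:] * op e i (k - i) [:g:]) =
      - ((-1)^i * of_nat (k choose i) * (of_nat (k - i) * G (Suc i))
       + (-1)^i * of_nat (k choose i) * (of_nat i * G i))"
      unfolding g1 g2 pdu_mult pdu_op_const by (simp add: algebra_simps)
  qed
  also have "\<dots> = 0" using tele[of k G] by simp
  finally show ?thesis .
qed

lemma pdu_eq_0_const:
  fixes p :: "'a poly"
  assumes "pdu p = 0" shows "p = [:coeff p 0:]"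
proof (rule poly_eqI)
  fix n
  show "coeff p n = coeff [:coeff p 0:] n"
  proof (cases n)
    case 0 then show ?thesis by simp
  next
    case (Suc m)
    have "of_nat (Suc m) * coeff p (Suc m) = 0"
      using assms by (metis coeff_0 coeff_pdu)
    then have "sc (1 / of_nat (Suc m)) * (of_nat (Suc m) * coeff p (Suc m)) = 0" by simp
    then have "coeff p (Suc m) = 0"
      using sc_inv[of "of_nat (Suc m)"] by (simp add: mult.assoc[symmetric] del: of_nat_Suc)
    then show ?thesis using Suc by simp
  qed
qed

lemma pdu_eq_0_const':
  fixes p :: "'a poly"
  assumes "pdu p = 0" "coeff p 0 = c" shows "p = [:c:]"
  using pdu_eq_0_const[OF assms(1)] assms(2) by simp


end




type_synonym mon6 = "(nat \<times> nat) \<times> (nat \<times> nat) \<times> (nat \<times> nat)"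
type_synonym sym = "mon6 \<Rightarrow>\<^sub>0 complex"

definition mono6 :: "nat \<Rightarrow> nat \<Rightarrow> nat \<Rightarrow> nat \<Rightarrow> nat \<Rightarrow> nat \<Rightarrow> complex \<Rightarrow> sym" where
  "mono6 a1 b1 a2 b2 a3 b3 c = Poly_Mapping.single ((a1,b1),(a2,b2),(a3,b3)) c"

lemma mono6_mult: "mono6 a1 b1 a2 b2 a3 b3 c * mono6 a1' b1' a2' b2' a3' b3' c'
   = mono6 (a1+a1') (b1+b1') (a2+a2') (b2+b2') (a3+a3') (b3+b3') (c*c')"
  by (simp add: mono6_def mult_single)

lemma mono6_one: "mono6 0 0 0 0 0 0 1 = 1"
  by (simp add: mono6_def flip: zero_prod_def)

lemma mono6_pow: "mono6 a1 b1 a2 b2 a3 b3 c ^ n = mono6 (n*a1) (n*b1) (n*a2) (n*b2) (n*a3) (n*b3) (c ^ n)"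
  by (induction n) (simp_all add: mono6_mult mono6_one)

lemma of_nat_sym: "(of_nat k :: sym) = mono6 0 0 0 0 0 0 (of_nat k)"
  by (simp add: mono6_def of_nat_single zero_prod_def)

lemma neg_sym: "- mono6 a1 b1 a2 b2 a3 b3 c = mono6 a1 b1 a2 b2 a3 b3 (- c)"
  by (simp add: mono6_def single_uminus)

lemma mono6_add: "mono6 a1 b1 a2 b2 a3 b3 c + mono6 a1 b1 a2 b2 a3 b3 c' = mono6 a1 b1 a2 b2 a3 b3 (c + c')"
  by (simp add: mono6_def single_add)

lemma mono6_0 [simp]: "mono6 a1 b1 a2 b2 a3 b3 0 = 0"
  by (simp add: mono6_def)

lemma const_mono6_mult: "mono6 0 0 0 0 0 0 c * mono6 a1 b1 a2 b2 a3 b3 c' = mono6 a1 b1 a2 b2 a3 b3 (c * c')"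
  by (simp add: mono6_mult)

lemma binom_mono6:
  "(mono6 a1 b1 a2 b2 a3 b3 c + mono6 a1' b1' a2' b2' a3' b3' c') ^ n
   = (\<Sum>i\<le>n. mono6 (i*a1 + (n-i)*a1') (i*b1 + (n-i)*b1') (i*a2 + (n-i)*a2') (i*b2 + (n-i)*b2')
        (i*a3 + (n-i)*a3') (i*b3 + (n-i)*b3') (of_nat (n choose i) * c^i * c'^(n-i)))"
  by (simp add: binomial_ring mono6_pow of_nat_sym mono6_mult)

lemma smult_sum_right: "smult a (sum g S) = (\<Sum>i\<in>S. smult a (g i))"
  by (induction S rule: infinite_finite_induct) (auto simp: smult_add_right)

context dalg
begin

lemma fall_neg: "(\<Prod>t=0..<i. - a - of_nat t) = fact i * (-1)^i * ((a + of_nat i - 1) gchoose i)"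
  for a :: complex
  using gbinomial_mult_fact[of i "-a"] by (simp add: gbinomial_minus mult.assoc)

lemma M_const: "M k (-x) [:f:] (-y) [:g:] = [:of_nat (fact k) * B k x f y g:]"
proof -
  define m where "m = M k (-x) [:f:] (-y) [:g:]"
  have "coeff m 0 = poly m 0" by (simp add: poly_0_coeff_0)
  also have "\<dots> = (\<Sum>i\<le>k. (-1)^i * of_nat (k choose i) *
      (sc (\<Prod>t=0..<i. - x - of_nat (k - i) - of_nat t) * (D ^^ (k - i)) f *
      (sc (\<Prod>t=0..<k - i. - y - of_nat i - of_nat t) * (D ^^ i) g)))"
    unfolding m_def M_def by (simp add: poly_sum poly_op_const)
  also have "\<dots> = (\<Sum>i\<le>k. of_nat (fact k) *
      (sc ((-1)^(k - i) * ((x + of_nat k - 1) gchoose i) * ((y + of_nat k - 1) gchoose (k - i)))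
      * ((D ^^ (k - i)) f * (D ^^ i) g)))"
  proof (rule sum.cong[OF refl])
    fix i assume "i \<in> {..k}"
    then have ik: "i \<le> k" by simp
    have e1: "(\<Prod>t=0..<i. - x - of_nat (k - i) - of_nat t) = fact i * (-1)^i * ((x + of_nat k - 1) gchoose i)"
      using fall_neg[where i=i and a="x + of_nat (k - i)"] ik by (simp add: of_nat_diff algebra_simps)
    have e2: "(\<Prod>t=0..<k - i. - y - of_nat i - of_nat t) = fact (k - i) * (-1)^(k - i) * ((y + of_nat k - 1) gchoose (k - i))"
      using fall_neg[where i="k - i" and a="y + of_nat i"] ik by (simp add: of_nat_diff algebra_simps)
    have fk: "(of_nat (k choose i) * fact i * fact (k - i) :: complex) = fact k"
      using binomial_fact_lemma[OF ik] by (metis (mono_tags, lifting) mult.commute mult.left_commute of_nat_fact of_nat_mult)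
    have "((-1)^i * of_nat (k choose i) :: 'a) = sc ((-1)^i * of_nat (k choose i))"
      by (simp add: sc_mult sc_pow sc_uminus sc_one)
    then have L: "(-1)^i * of_nat (k choose i) * (sc (\<Prod>t=0..<i. - x - of_nat (k - i) - of_nat t) * (D ^^ (k - i)) f *
      (sc (\<Prod>t=0..<k - i. - y - of_nat i - of_nat t) * (D ^^ i) g))
      = sc ((-1)^i * of_nat (k choose i) * (\<Prod>t=0..<i. - x - of_nat (k - i) - of_nat t)
            * (\<Prod>t=0..<k - i. - y - of_nat i - of_nat t)) * ((D ^^ (k - i)) f * (D ^^ i) g)"
      by (simp add: sc_mult algebra_simps)
    have cx: "(-1)^i * of_nat (k choose i) * (\<Prod>t=0..<i. - x - of_nat (k - i) - of_nat t)
            * (\<Prod>t=0..<k - i. - y - of_nat i - of_nat t)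
        = of_nat (fact k) * ((-1)^(k - i) * ((x + of_nat k - 1) gchoose i) * ((y + of_nat k - 1) gchoose (k - i)))"
    proof -
      have "(-1)^i * of_nat (k choose i) * (\<Prod>t=0..<i. - x - of_nat (k - i) - of_nat t)
            * (\<Prod>t=0..<k - i. - y - of_nat i - of_nat t)
          = ((-1)^i * (-1)^i) * (of_nat (k choose i) * fact i * fact (k - i)) * ((-1)^(k - i) *
             ((x + of_nat k - 1) gchoose i) * ((y + of_nat k - 1) gchoose (k - i)))"
        unfolding e1 e2 by (simp add: algebra_simps)
      also have "\<dots> = of_nat (fact k) * ((-1)^(k - i) * ((x + of_nat k - 1) gchoose i) * ((y + of_nat k - 1) gchoose (k - i)))"
        unfolding fk by (simp add: power_mult_distrib[symmetric])
      finally show ?thesis .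
    qed
    show "(-1)^i * of_nat (k choose i) * (sc (\<Prod>t=0..<i. - x - of_nat (k - i) - of_nat t) * (D ^^ (k - i)) f *
      (sc (\<Prod>t=0..<k - i. - y - of_nat i - of_nat t) * (D ^^ i) g)) =
      of_nat (fact k) * (sc ((-1)^(k - i) * ((x + of_nat k - 1) gchoose i) * ((y + of_nat k - 1) gchoose (k - i)))
      * ((D ^^ (k - i)) f * (D ^^ i) g))"
    proof -
      have "sc (of_nat (fact k)) = of_nat (fact k)" by (rule sc_of_nat)
      then show ?thesis unfolding L cx by (simp only: sc_mult mult.assoc)
    qed
  qed
  also have "\<dots> = of_nat (fact k) * B k x f y g"
  proof -
    have "B k x f y g = (\<Sum>r\<le>k. sc ((-1)^r * ((x + of_nat k - 1) gchoose (k - r))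
        * ((y + of_nat k - 1) gchoose r)) * ((D ^^ r) f * (D ^^ (k - r)) g))"
      unfolding B_def by (simp add: atLeast0AtMost)
    also have "\<dots> = (\<Sum>i\<le>k. sc ((-1)^(k - i) * ((x + of_nat k - 1) gchoose i)
        * ((y + of_nat k - 1) gchoose (k - i))) * ((D ^^ (k - i)) f * (D ^^ i) g))"
      by (subst atLeast0AtMost[symmetric], subst sum.atLeastAtMost_rev)
         (rule sum.cong, auto simp: atLeast0AtMost)
    finally show ?thesis by (simp add: sum_distrib_left)
  qed
  finally have c: "coeff m 0 = of_nat (fact k) * B k x f y g" .
  show ?thesis
    using pdu_eq_0_const'[OF pdu_M_const c[unfolded m_def]] .
qed


definition evS :: "(mon6 \<Rightarrow> 'a poly) \<Rightarrow> sym \<Rightarrow> 'a poly" where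
  "evS T Q = (\<Sum>m\<in>Poly_Mapping.keys Q. smult (sc (Poly_Mapping.lookup Q m)) (T m))"

lemma evS_superset:
  assumes "finite S" "Poly_Mapping.keys Q \<subseteq> S"
  shows "evS T Q = (\<Sum>m\<in>S. smult (sc (Poly_Mapping.lookup Q m)) (T m))"
  unfolding evS_def
  by (rule sum.mono_neutral_left[OF assms(1) assms(2)]) (auto simp: in_keys_iff)

lemma evS_add: "evS T (Q1 + Q2) = evS T Q1 + evS T Q2"
proof -
  let ?S = "Poly_Mapping.keys Q1 \<union> Poly_Mapping.keys Q2"
  have "Poly_Mapping.keys (Q1 + Q2) \<subseteq> ?S" by (rule keys_add)
  then have "evS T (Q1 + Q2) = (\<Sum>m\<in>?S. smult (sc (Poly_Mapping.lookup (Q1 + Q2) m)) (T m))"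
    by (intro evS_superset) auto
  also have "\<dots> = (\<Sum>m\<in>?S. smult (sc (Poly_Mapping.lookup Q1 m)) (T m))
      + (\<Sum>m\<in>?S. smult (sc (Poly_Mapping.lookup Q2 m)) (T m))"
    by (simp add: lookup_add sc_add smult_add_left sum.distrib)
  also have "\<dots> = evS T Q1 + evS T Q2"
    by (subst (1 2) evS_superset[where S="?S"]) auto
  finally show ?thesis .
qed

lemma evS_zero [simp]: "evS T 0 = 0"
  by (simp add: evS_def)

lemma evS_sum: "evS T (sum g I) = (\<Sum>i\<in>I. evS T (g i))"
  by (induction I rule: infinite_finite_induct) (auto simp: evS_add)

lemma evS_mono6: "evS T (mono6 a1 b1 a2 b2 a3 b3 c) = smult (sc c) (T ((a1,b1),(a2,b2),(a3,b3)))"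
  by (cases "c = 0") (simp_all add: evS_def mono6_def)

lemma evS_const: "evS T (mono6 0 0 0 0 0 0 c * Q) = smult (sc c) (evS T Q)"
proof -
  have l: "Poly_Mapping.lookup (mono6 0 0 0 0 0 0 c * Q) m = c * Poly_Mapping.lookup Q m" for m
    using mult_map_scale_conv_mult[of c Q, symmetric] by (simp add: mono6_def zero_prod_def[symmetric] Poly_Mapping.map.rep_eq when_def)
  have "Poly_Mapping.keys (mono6 0 0 0 0 0 0 c * Q) \<subseteq> Poly_Mapping.keys Q"
    by (auto simp: in_keys_iff l)
  then have "evS T (mono6 0 0 0 0 0 0 c * Q) = (\<Sum>m\<in>Poly_Mapping.keys Q. smult (sc (c * Poly_Mapping.lookup Q m)) (T m))"
    by (subst evS_superset[where S="Poly_Mapping.keys Q"]) (auto simp: l)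
  also have "\<dots> = smult (sc c) (evS T Q)"
    by (simp add: evS_def smult_sum_right sc_mult)
  finally show ?thesis .
qed

lemma smult_sc_nat: "smult (sc (of_nat k)) X = of_nat k * X"
  by (simp add: of_nat_poly)

definition T3 :: "complex \<Rightarrow> complex \<Rightarrow> complex \<Rightarrow> 'a poly \<Rightarrow> 'a poly \<Rightarrow> 'a poly \<Rightarrow> mon6 \<Rightarrow> 'a poly" where
  "T3 d e f p q r m = (case m of ((a1,b1),(a2,b2),(a3,b3)) \<Rightarrow> op d a1 b1 p * op e a2 b2 q * op f a3 b3 r)"
definition T12 :: "complex \<Rightarrow> complex \<Rightarrow> 'a poly \<Rightarrow> 'a poly \<Rightarrow> mon6 \<Rightarrow> 'a poly" where
  "T12 d e p q m = (case m of ((a1,b1),(a2,b2),_) \<Rightarrow> op d a1 b1 p * op e a2 b2 q)"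
definition T23 :: "complex \<Rightarrow> complex \<Rightarrow> 'a poly \<Rightarrow> 'a poly \<Rightarrow> mon6 \<Rightarrow> 'a poly" where
  "T23 e f q r m = (case m of (_,(a2,b2),(a3,b3)) \<Rightarrow> op e a2 b2 q * op f a3 b3 r)"

lemma sum12_expand: "(mono6 1 0 0 0 0 0 1 + mono6 0 0 1 0 0 0 1) ^ A = (\<Sum>a\<le>A. mono6 a 0 (A - a) 0 0 0 (of_nat (A choose a)))"
  unfolding binom_mono6 by (rule sum.cong) simp_all
lemma sum12t_expand: "(mono6 0 1 0 0 0 0 1 + mono6 0 0 0 1 0 0 1) ^ Bq = (\<Sum>b\<le>Bq. mono6 0 b 0 (Bq - b) 0 0 (of_nat (Bq choose b)))"
  unfolding binom_mono6 by (rule sum.cong) simp_all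

lemma core12:
  "evS (T3 d e f p q r) (mono6 a1 b1 a2 b2 0 0 1 * (mono6 1 0 0 0 0 0 1 + mono6 0 0 1 0 0 0 1) ^ A
      * (mono6 0 1 0 0 0 0 1 + mono6 0 0 0 1 0 0 1) ^ Bq * mono6 0 0 0 0 j l 1)
   = op (d + e - of_nat (a1 + b1 + a2 + b2)) A Bq (T12 d e p q ((a1,b1),(a2,b2),(0,0))) * op f j l r"
proof -
  have "mono6 a1 b1 a2 b2 0 0 1 * (mono6 1 0 0 0 0 0 1 + mono6 0 0 1 0 0 0 1) ^ A
      * (mono6 0 1 0 0 0 0 1 + mono6 0 0 0 1 0 0 1) ^ Bq * mono6 0 0 0 0 j l 1
    = (\<Sum>a\<le>A. \<Sum>b\<le>Bq. mono6 (a1 + a) (b1 + b) (a2 + (A - a)) (b2 + (Bq - b)) j l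
          (of_nat (A choose a) * of_nat (Bq choose b)))"
    unfolding sum12_expand sum12t_expand sum_distrib_left sum_distrib_right
    by (simp add: mono6_mult, rule sum.swap)
  then have "evS (T3 d e f p q r) (mono6 a1 b1 a2 b2 0 0 1 * (mono6 1 0 0 0 0 0 1 + mono6 0 0 1 0 0 0 1) ^ A
      * (mono6 0 1 0 0 0 0 1 + mono6 0 0 0 1 0 0 1) ^ Bq * mono6 0 0 0 0 j l 1)
    = (\<Sum>a\<le>A. \<Sum>b\<le>Bq. of_nat (A choose a) * of_nat (Bq choose b) *
        (op d (a + a1) (b + b1) p * op e (A - a + a2) (Bq - b + b2) q * op f j l r))"
    by (simp add: evS_sum evS_mono6 T3_def sc_mult smult_sc_nat[symmetric] ac_simps)
  also have "\<dots> = op (d + e - of_nat (a1 + b1 + a2 + b2)) A Bq (T12 d e p q ((a1,b1),(a2,b2),(0,0))) * op f j l r"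
  proof -
    have de: "d + e - of_nat (a1 + b1 + a2 + b2) = (d - of_nat a1 - of_nat b1) + (e - of_nat a2 - of_nat b2)"
      by simp
    show ?thesis
      unfolding T12_def de by (simp add: op_Leibniz op_op sum_distrib_right sum_distrib_left ac_simps)
  qed
  finally show ?thesis .
qed

lemma sum23_expand: "(mono6 0 0 1 0 0 0 1 + mono6 0 0 0 0 1 0 1) ^ A = (\<Sum>a\<le>A. mono6 0 0 a 0 (A - a) 0 (of_nat (A choose a)))"
  unfolding binom_mono6 by (rule sum.cong) simp_all
lemma sum23t_expand: "(mono6 0 0 0 1 0 0 1 + mono6 0 0 0 0 0 1 1) ^ Bq = (\<Sum>b\<le>Bq. mono6 0 0 0 b 0 (Bq - b) (of_nat (Bq choose b)))"
  unfolding binom_mono6 by (rule sum.cong) simp_all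

lemma core23:
  "evS (T3 d e f p q r) (mono6 0 0 a2 b2 a3 b3 1 * mono6 i j 0 0 0 0 1 * (mono6 0 0 1 0 0 0 1 + mono6 0 0 0 0 1 0 1) ^ A
      * (mono6 0 0 0 1 0 0 1 + mono6 0 0 0 0 0 1 1) ^ Bq)
   = op d i j p * op (e + f - of_nat (a2 + b2 + a3 + b3)) A Bq (T23 e f q r ((0,0),(a2,b2),(a3,b3)))"
proof -
  have "mono6 0 0 a2 b2 a3 b3 1 * mono6 i j 0 0 0 0 1 * (mono6 0 0 1 0 0 0 1 + mono6 0 0 0 0 1 0 1) ^ A
      * (mono6 0 0 0 1 0 0 1 + mono6 0 0 0 0 0 1 1) ^ Bq
    = (\<Sum>a\<le>A. \<Sum>b\<le>Bq. mono6 i j (a2 + a) (b2 + b) (a3 + (A - a)) (b3 + (Bq - b))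
          (of_nat (A choose a) * of_nat (Bq choose b)))"
    unfolding sum23_expand sum23t_expand sum_distrib_left sum_distrib_right
    by (simp add: mono6_mult, rule sum.swap)
  then have "evS (T3 d e f p q r) (mono6 0 0 a2 b2 a3 b3 1 * mono6 i j 0 0 0 0 1 * (mono6 0 0 1 0 0 0 1 + mono6 0 0 0 0 1 0 1) ^ A
      * (mono6 0 0 0 1 0 0 1 + mono6 0 0 0 0 0 1 1) ^ Bq)
    = (\<Sum>a\<le>A. \<Sum>b\<le>Bq. of_nat (A choose a) * of_nat (Bq choose b) *
        (op d i j p * op e (a + a2) (b + b2) q * op f (A - a + a3) (Bq - b + b3) r))"
    by (simp add: evS_sum evS_mono6 T3_def sc_mult smult_sc_nat[symmetric] ac_simps)
  also have "\<dots> = op d i j p * op (e + f - of_nat (a2 + b2 + a3 + b3)) A Bq (T23 e f q r ((0,0),(a2,b2),(a3,b3)))"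
  proof -
    have de: "e + f - of_nat (a2 + b2 + a3 + b3) = (e - of_nat a2 - of_nat b2) + (f - of_nat a3 - of_nat b3)"
      by simp
    show ?thesis
      unfolding T23_def de by (simp add: op_Leibniz op_op sum_distrib_right sum_distrib_left ac_simps)
  qed
  finally show ?thesis .
qed

abbreviation "S1 \<equiv> mono6 1 0 0 0 0 0 1"
abbreviation "T1 \<equiv> mono6 0 1 0 0 0 0 1"
abbreviation "S2 \<equiv> mono6 0 0 1 0 0 0 1"
abbreviation "T2 \<equiv> mono6 0 0 0 1 0 0 1"
abbreviation "S3 \<equiv> mono6 0 0 0 0 1 0 1"
abbreviation "T3' \<equiv> mono6 0 0 0 0 0 1 1"

definition P12 :: sym where "P12 = S1 * T2 - T1 * S2"
definition P13 :: sym where "P13 = S1 * T3' - T1 * S3"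
definition P23 :: sym where "P23 = S2 * T3' - T2 * S3"

lemma mono6_split: "mono6 (a1 + a1') (b1 + b1') (a2 + a2') (b2 + b2') (a3 + a3') (b3 + b3') (c * c') =
   mono6 a1 b1 a2 b2 a3 b3 c * mono6 a1' b1' a2' b2' a3' b3' c'"
  by (simp add: mono6_mult)

lemma P1323_pow: "(P13 + P23) ^ K = (\<Sum>j\<le>K. mono6 0 0 0 0 0 0 ((-1)^j * of_nat (K choose j)) *
      ((S1 + S2) ^ (K - j) * (T1 + T2) ^ j * mono6 0 0 0 0 j (K - j) 1))"
proof -
  have eq: "P13 + P23 = (T1 + T2) * mono6 0 0 0 0 1 0 (-1) + (S1 + S2) * T3'"
    unfolding P13_def P23_def by (simp add: algebra_simps neg_sym[symmetric])
  have "(P13 + P23) ^ K = ((T1 + T2) * mono6 0 0 0 0 1 0 (-1) + (S1 + S2) * T3') ^ K"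
    by (simp only: eq)
  also have "\<dots> = (\<Sum>j\<le>K. of_nat (K choose j) * ((T1 + T2) * mono6 0 0 0 0 1 0 (-1)) ^ j * ((S1 + S2) * T3') ^ (K - j))"
    by (rule binomial_ring)
  also have "\<dots> = (\<Sum>j\<le>K. mono6 0 0 0 0 0 0 ((-1)^j * of_nat (K choose j)) *
      ((S1 + S2) ^ (K - j) * (T1 + T2) ^ j * mono6 0 0 0 0 j (K - j) 1))"
  proof (intro sum.cong refl)
    fix j
    have f1: "mono6 0 0 0 0 0 0 ((-1)^j * of_nat (K choose j)) = mono6 0 0 0 0 0 0 ((-1)^j) * of_nat (K choose j)"
      using mono6_split[of 0 0 0 0 0 0 0 0 0 0 0 0 "(-1)^j" "of_nat (K choose j)"] by (simp add: of_nat_sym)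
    have f2: "mono6 0 0 0 0 j (K - j) 1 = mono6 0 0 0 0 j 0 1 * mono6 0 0 0 0 0 (K - j) 1"
      using mono6_split[of 0 0 0 0 0 0 0 0 j 0 0 "K - j" 1 1] by simp
    have f3: "mono6 0 0 0 0 1 0 (-1) ^ j = mono6 0 0 0 0 0 0 ((-1)^j) * mono6 0 0 0 0 j 0 1"
      using mono6_split[of 0 0 0 0 0 0 0 0 0 j 0 0 "(-1)^j" 1] by (simp add: mono6_pow)
    have f4: "T3' ^ (K - j) = mono6 0 0 0 0 0 (K - j) 1"
      by (simp add: mono6_pow)
    show "of_nat (K choose j) * ((T1 + T2) * mono6 0 0 0 0 1 0 (-1)) ^ j * ((S1 + S2) * T3') ^ (K - j) =
      mono6 0 0 0 0 0 0 ((-1)^j * of_nat (K choose j)) * ((S1 + S2) ^ (K - j) * (T1 + T2) ^ j * mono6 0 0 0 0 j (K - j) 1)"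
      by (simp only: power_mult_distrib f1 f2 f3 f4) (simp only: mult.assoc mult.commute mult.left_commute)
  qed
  finally show ?thesis .
qed

lemma P1213_pow: "(P12 + P13) ^ K = (\<Sum>j\<le>K. mono6 0 0 0 0 0 0 ((-1)^j * of_nat (K choose j)) *
      (mono6 (K - j) j 0 0 0 0 1 * (S2 + S3) ^ j * (T2 + T3') ^ (K - j)))"
proof -
  have eq: "P12 + P13 = (S2 + S3) * mono6 0 1 0 0 0 0 (-1) + (T2 + T3') * S1"
    unfolding P12_def P13_def by (simp add: algebra_simps neg_sym[symmetric])
  have "(P12 + P13) ^ K = ((S2 + S3) * mono6 0 1 0 0 0 0 (-1) + (T2 + T3') * S1) ^ K"
    by (simp only: eq)
  also have "\<dots> = (\<Sum>j\<le>K. of_nat (K choose j) * ((S2 + S3) * mono6 0 1 0 0 0 0 (-1)) ^ j * ((T2 + T3') * S1) ^ (K - j))"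
    by (rule binomial_ring)
  also have "\<dots> = (\<Sum>j\<le>K. mono6 0 0 0 0 0 0 ((-1)^j * of_nat (K choose j)) *
      (mono6 (K - j) j 0 0 0 0 1 * (S2 + S3) ^ j * (T2 + T3') ^ (K - j)))"
  proof (intro sum.cong refl)
    fix j
    have f1: "mono6 0 0 0 0 0 0 ((-1)^j * of_nat (K choose j)) = mono6 0 0 0 0 0 0 ((-1)^j) * of_nat (K choose j)"
      using mono6_split[of 0 0 0 0 0 0 0 0 0 0 0 0 "(-1)^j" "of_nat (K choose j)"] by (simp add: of_nat_sym)
    have f2: "mono6 (K - j) j 0 0 0 0 1 = mono6 0 j 0 0 0 0 1 * mono6 (K - j) 0 0 0 0 0 1"
      using mono6_split[of 0 "K - j" j 0 0 0 0 0 0 0 0 0 1 1] by simp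
    have f3: "mono6 0 1 0 0 0 0 (-1) ^ j = mono6 0 0 0 0 0 0 ((-1)^j) * mono6 0 j 0 0 0 0 1"
      using mono6_split[of 0 0 0 j 0 0 0 0 0 0 0 0 "(-1)^j" 1] by (simp add: mono6_pow)
    have f4: "S1 ^ (K - j) = mono6 (K - j) 0 0 0 0 0 1"
      by (simp add: mono6_pow)
    show "of_nat (K choose j) * ((S2 + S3) * mono6 0 1 0 0 0 0 (-1)) ^ j * ((T2 + T3') * S1) ^ (K - j) =
      mono6 0 0 0 0 0 0 ((-1)^j * of_nat (K choose j)) * (mono6 (K - j) j 0 0 0 0 1 * (S2 + S3) ^ j * (T2 + T3') ^ (K - j))"
      by (simp only: power_mult_distrib f1 f2 f3 f4) (simp only: mult.assoc mult.commute mult.left_commute)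
  qed
  finally show ?thesis .
qed

lemma sym_expand: "Q = (\<Sum>k\<in>Poly_Mapping.keys Q. mono6 0 0 0 0 0 0 (Poly_Mapping.lookup Q k) * Poly_Mapping.single k 1)"
proof -
  have e: "mono6 0 0 0 0 0 0 c * Poly_Mapping.single k 1 = Poly_Mapping.single k c" for c k
    by (simp add: mono6_def mult_single flip: zero_prod_def)
  show ?thesis
    unfolding e
    by (rule poly_mapping_eqI) (simp add: lookup_sum lookup_single when_def in_keys_iff sum.delta' cong: if_cong)
qed

lemma evS_mult_expand: "evS T (Q * X) = (\<Sum>k\<in>Poly_Mapping.keys Q. smult (sc (Poly_Mapping.lookup Q k)) (evS T (Poly_Mapping.single k 1 * X)))"
proof -
  have "evS T (Q * X) = evS T ((\<Sum>k\<in>Poly_Mapping.keys Q. mono6 0 0 0 0 0 0 (Poly_Mapping.lookup Q k) * Poly_Mapping.single k 1) * X)"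
    by (subst sym_expand[of Q]) (rule refl)
  also have "\<dots> = (\<Sum>k\<in>Poly_Mapping.keys Q. smult (sc (Poly_Mapping.lookup Q k)) (evS T (Poly_Mapping.single k 1 * X)))"
    by (simp add: sum_distrib_right evS_sum mult.assoc evS_const)
  finally show ?thesis .
qed

lemma sgn_smult: "smult (sc ((-1)^j * of_nat c)) X = (-1)^j * of_nat c * X"
proof -
  have "((-1)^j * of_nat c :: 'a poly) = [:(-1)^j * of_nat c:]"
    by (induction j) (simp_all add: of_nat_poly)
  then show ?thesis by (simp add: sc_mult sc_pow sc_uminus sc_one)
qed

lemma M_add1: "M K d (U + V) e r = M K d U e r + M K d V e r"
  by (simp add: M_def op_add algebra_simps sum.distrib)
lemma M_zero1 [simp]: "M K d 0 e r = 0"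
  by (simp add: M_def)
lemma M_sum1: "M K d (sum g I) e r = (\<Sum>i\<in>I. M K d (g i) e r)"
  by (induction I rule: infinite_finite_induct) (auto simp: M_add1)
lemma M_smult1: "M K d (smult (sc c) U) e r = smult (sc c) (M K d U e r)"
  by (simp add: M_def op_smult smult_sum_right algebra_simps)
lemma M_add2: "M K d p e (U + V) = M K d p e U + M K d p e V"
  by (simp add: M_def op_add algebra_simps sum.distrib)
lemma M_zero2 [simp]: "M K d p e 0 = 0"
  by (simp add: M_def)
lemma M_sum2: "M K d p e (sum g I) = (\<Sum>i\<in>I. M K d p e (g i))"
  by (induction I rule: infinite_finite_induct) (auto simp: M_add2)
lemma M_smult2: "M K d p e (smult (sc c) U) = smult (sc c) (M K d p e U)"
  by (simp add: M_def op_smult smult_sum_right algebra_simps)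

lemma lift12_mono:
  assumes "a1 + b1 + a2 + b2 = 2 * m"
  shows "M K (d + e - 2 * of_nat m) (T12 d e p q ((a1,b1),(a2,b2),(0,0))) f r
     = evS (T3 d e f p q r) (Poly_Mapping.single ((a1,b1),(a2,b2),(0,0)) 1 * (P13 + P23) ^ K)"
proof -
  have de: "d + e - 2 * of_nat m = d + e - of_nat (a1 + b1 + a2 + b2)"
    using assms by simp
  have "evS (T3 d e f p q r) (Poly_Mapping.single ((a1,b1),(a2,b2),(0,0)) 1 * (P13 + P23) ^ K)
    = (\<Sum>j\<le>K. smult (sc ((-1)^j * of_nat (K choose j)))
       (evS (T3 d e f p q r) (mono6 a1 b1 a2 b2 0 0 1 * (S1 + S2) ^ (K - j) * (T1 + T2) ^ j * mono6 0 0 0 0 j (K - j) 1)))"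
    unfolding P1323_pow sum_distrib_left evS_sum
    by (intro sum.cong refl) (simp add: evS_const[symmetric] mono6_def[symmetric] ac_simps)
  also have "\<dots> = M K (d + e - 2 * of_nat m) (T12 d e p q ((a1,b1),(a2,b2),(0,0))) f r"
    unfolding core12 de M_def sgn_smult by (simp add: atLeast0AtMost)
  finally show ?thesis by simp
qed

lemma lift12:
  assumes "\<forall>k\<in>Poly_Mapping.keys Q. \<exists>a1 b1 a2 b2. k = ((a1,b1),(a2,b2),(0,0)) \<and> a1 + b1 + a2 + b2 = 2 * m"
  shows "M K (d + e - 2 * of_nat m) (evS (T12 d e p q) Q) f r = evS (T3 d e f p q r) (Q * (P13 + P23) ^ K)"
proof -
  have "M K (d + e - 2 * of_nat m) (evS (T12 d e p q) Q) f r
      = (\<Sum>k\<in>Poly_Mapping.keys Q. smult (sc (Poly_Mapping.lookup Q k)) (M K (d + e - 2 * of_nat m) (T12 d e p q k) f r))"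
    unfolding evS_def M_sum1 M_smult1 ..
  also have "\<dots> = (\<Sum>k\<in>Poly_Mapping.keys Q. smult (sc (Poly_Mapping.lookup Q k))
       (evS (T3 d e f p q r) (Poly_Mapping.single k 1 * (P13 + P23) ^ K)))"
  proof (intro sum.cong refl)
    fix k assume "k \<in> Poly_Mapping.keys Q"
    then obtain a1 b1 a2 b2 where k: "k = ((a1,b1),(a2,b2),(0,0))" "a1 + b1 + a2 + b2 = 2 * m"
      using assms by blast
    show "smult (sc (Poly_Mapping.lookup Q k)) (M K (d + e - 2 * of_nat m) (T12 d e p q k) f r) =
      smult (sc (Poly_Mapping.lookup Q k)) (evS (T3 d e f p q r) (Poly_Mapping.single k 1 * (P13 + P23) ^ K))"
      unfolding k(1) lift12_mono[OF k(2)] ..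
  qed
  also have "\<dots> = evS (T3 d e f p q r) (Q * (P13 + P23) ^ K)"
    by (rule evS_mult_expand[symmetric])
  finally show ?thesis .
qed

lemma lift23_mono:
  assumes "a2 + b2 + a3 + b3 = 2 * m"
  shows "M K d p (e + f - 2 * of_nat m) (T23 e f q r ((0,0),(a2,b2),(a3,b3)))
     = evS (T3 d e f p q r) (Poly_Mapping.single ((0,0),(a2,b2),(a3,b3)) 1 * (P12 + P13) ^ K)"
proof -
  have de: "e + f - 2 * of_nat m = e + f - of_nat (a2 + b2 + a3 + b3)"
    using assms by simp
  have "evS (T3 d e f p q r) (Poly_Mapping.single ((0,0),(a2,b2),(a3,b3)) 1 * (P12 + P13) ^ K)
    = (\<Sum>j\<le>K. smult (sc ((-1)^j * of_nat (K choose j)))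
       (evS (T3 d e f p q r) (mono6 0 0 a2 b2 a3 b3 1 * mono6 (K - j) j 0 0 0 0 1 * (S2 + S3) ^ j * (T2 + T3') ^ (K - j))))"
    unfolding P1213_pow sum_distrib_left evS_sum
    by (intro sum.cong refl) (simp add: evS_const[symmetric] mono6_def[symmetric] ac_simps)
  also have "\<dots> = M K d p (e + f - 2 * of_nat m) (T23 e f q r ((0,0),(a2,b2),(a3,b3)))"
    unfolding core23 de M_def sgn_smult by (simp add: atLeast0AtMost)
  finally show ?thesis by simp
qed

lemma lift23:
  assumes "\<forall>k\<in>Poly_Mapping.keys Q. \<exists>a2 b2 a3 b3. k = ((0,0),(a2,b2),(a3,b3)) \<and> a2 + b2 + a3 + b3 = 2 * m"
  shows "M K d p (e + f - 2 * of_nat m) (evS (T23 e f q r) Q) = evS (T3 d e f p q r) (Q * (P12 + P13) ^ K)"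
proof -
  have "M K d p (e + f - 2 * of_nat m) (evS (T23 e f q r) Q)
      = (\<Sum>k\<in>Poly_Mapping.keys Q. smult (sc (Poly_Mapping.lookup Q k)) (M K d p (e + f - 2 * of_nat m) (T23 e f q r k)))"
    unfolding evS_def M_sum2 M_smult2 ..
  also have "\<dots> = (\<Sum>k\<in>Poly_Mapping.keys Q. smult (sc (Poly_Mapping.lookup Q k))
       (evS (T3 d e f p q r) (Poly_Mapping.single k 1 * (P12 + P13) ^ K)))"
  proof (intro sum.cong refl)
    fix k assume "k \<in> Poly_Mapping.keys Q"
    then obtain a2 b2 a3 b3 where k: "k = ((0,0),(a2,b2),(a3,b3))" "a2 + b2 + a3 + b3 = 2 * m"
      using assms by blast
    show "smult (sc (Poly_Mapping.lookup Q k)) (M K d p (e + f - 2 * of_nat m) (T23 e f q r k)) =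
      smult (sc (Poly_Mapping.lookup Q k)) (evS (T3 d e f p q r) (Poly_Mapping.single k 1 * (P12 + P13) ^ K))"
      unfolding k(1) lift23_mono[OF k(2)] ..
  qed
  also have "\<dots> = evS (T3 d e f p q r) (Q * (P12 + P13) ^ K)"
    by (rule evS_mult_expand[symmetric])
  finally show ?thesis .
qed

lemma P12_pow: "P12 ^ m = (\<Sum>i\<le>m. mono6 (m - i) i i (m - i) 0 0 ((-1)^i * of_nat (m choose i)))"
proof -
  have eq: "P12 = mono6 0 1 1 0 0 0 (-1) + mono6 1 0 0 1 0 0 1"
    unfolding P12_def by (simp add: mono6_mult neg_sym[symmetric])
  show ?thesis unfolding eq binom_mono6 by (intro sum.cong refl) (simp add: ac_simps)
qed

lemma P23_pow: "P23 ^ m = (\<Sum>i\<le>m. mono6 0 0 (m - i) i i (m - i) ((-1)^i * of_nat (m choose i)))"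
proof -
  have eq: "P23 = mono6 0 0 0 1 1 0 (-1) + mono6 0 0 1 0 0 1 1"
    unfolding P23_def by (simp add: mono6_mult neg_sym[symmetric])
  show ?thesis unfolding eq binom_mono6 by (intro sum.cong refl) (simp add: ac_simps)
qed

lemma M_P12: "M m d p e q = evS (T12 d e p q) (P12 ^ m)"
  unfolding P12_pow evS_sum evS_mono6 sgn_smult M_def T12_def by simp

lemma M_P23: "M m e q f r = evS (T23 e f q r) (P23 ^ m)"
  unfolding P23_pow evS_sum evS_mono6 sgn_smult M_def T23_def by simp

lemma keys_P12_pow: "\<forall>k\<in>Poly_Mapping.keys (P12 ^ m). \<exists>a1 b1 a2 b2. k = ((a1,b1),(a2,b2),(0,0)) \<and> a1 + b1 + a2 + b2 = 2 * m"
proof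
  fix k assume "k \<in> Poly_Mapping.keys (P12 ^ m)"
  then have "k \<in> (\<Union>i\<le>m. Poly_Mapping.keys (mono6 (m - i) i i (m - i) 0 0 ((-1)^i * of_nat (m choose i))))"
    unfolding P12_pow by (rule subsetD[OF keys_sum])
  then obtain i where "i \<le> m" "k = ((m - i, i), (i, m - i), (0, 0))"
    by (auto simp: mono6_def split: if_splits)
  then show "\<exists>a1 b1 a2 b2. k = ((a1,b1),(a2,b2),(0,0)) \<and> a1 + b1 + a2 + b2 = 2 * m"
    by auto
qed

lemma keys_P23_pow: "\<forall>k\<in>Poly_Mapping.keys (P23 ^ m). \<exists>a2 b2 a3 b3. k = ((0,0),(a2,b2),(a3,b3)) \<and> a2 + b2 + a3 + b3 = 2 * m"
proof
  fix k assume "k \<in> Poly_Mapping.keys (P23 ^ m)"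
  then have "k \<in> (\<Union>i\<le>m. Poly_Mapping.keys (mono6 0 0 (m - i) i i (m - i) ((-1)^i * of_nat (m choose i))))"
    unfolding P23_pow by (rule subsetD[OF keys_sum])
  then obtain i where "i \<le> m" "k = ((0, 0), (m - i, i), (i, m - i))"
    by (auto simp: mono6_def split: if_splits)
  then show "\<exists>a2 b2 a3 b3. k = ((0,0),(a2,b2),(a3,b3)) \<and> a2 + b2 + a3 + b3 = 2 * m"
    by auto
qed

lemma evS_of_nat: "evS T (of_nat c * Q) = of_nat c * evS T Q"
  by (simp add: of_nat_sym evS_const) (simp add: of_nat_poly)

lemma moyal_assoc:
  "(\<Sum>m\<le>n. of_nat (n choose m) * M (n - m) (d + e - 2 * of_nat m) (M m d p e q) f r)
 = (\<Sum>m\<le>n. of_nat (n choose m) * M (n - m) d p (e + f - 2 * of_nat m) (M m e q f r))"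
proof -
  have "(\<Sum>m\<le>n. of_nat (n choose m) * M (n - m) (d + e - 2 * of_nat m) (M m d p e q) f r)
      = (\<Sum>m\<le>n. evS (T3 d e f p q r) (of_nat (n choose m) * P12 ^ m * (P13 + P23) ^ (n - m)))"
  proof (intro sum.cong refl)
    fix m
    show "of_nat (n choose m) * M (n - m) (d + e - 2 * of_nat m) (M m d p e q) f r
      = evS (T3 d e f p q r) (of_nat (n choose m) * P12 ^ m * (P13 + P23) ^ (n - m))"
      by (simp only: M_P12[of m d p e q] lift12[OF keys_P12_pow] mult.assoc evS_of_nat)
  qed
  also have "\<dots> = evS (T3 d e f p q r) ((P12 + (P13 + P23)) ^ n)"
    by (simp only: evS_sum[symmetric] binomial_ring[of P12 "P13 + P23" n])
  also have "\<dots> = evS (T3 d e f p q r) ((P23 + (P12 + P13)) ^ n)"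
    by (simp add: ac_simps)
  also have "\<dots> = (\<Sum>m\<le>n. evS (T3 d e f p q r) (of_nat (n choose m) * P23 ^ m * (P12 + P13) ^ (n - m)))"
    by (simp only: evS_sum[symmetric] binomial_ring[of P23 "P12 + P13" n])
  also have "\<dots> = (\<Sum>m\<le>n. of_nat (n choose m) * M (n - m) d p (e + f - 2 * of_nat m) (M m e q f r))"
  proof (intro sum.cong refl)
    fix m
    show "evS (T3 d e f p q r) (of_nat (n choose m) * P23 ^ m * (P12 + P13) ^ (n - m))
      = of_nat (n choose m) * M (n - m) d p (e + f - 2 * of_nat m) (M m e q f r)"
      by (simp only: M_P23[of m e q f r] lift23[OF keys_P23_pow] mult.assoc evS_of_nat)
  qed
  finally show ?thesis .
qed

lemma Dn_of_nat: "(D ^^ r) (of_nat c * u) = of_nat c * (D ^^ r) u"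
  using Dn_scm[of r "of_nat c" u] by simp

lemma B_nat_left: "B k x (of_nat c * u) y g = of_nat c * B k x u y g"
  unfolding B_def Dn_of_nat by (simp add: sum_distrib_left ac_simps)

lemma B_nat_right: "B k x f y (of_nat c * u) = of_nat c * B k x f y u"
  unfolding B_def Dn_of_nat by (simp add: sum_distrib_left ac_simps)

lemma const_mult_nat: "(of_nat c :: 'a poly) * [:a:] = [:of_nat c * a:]"
  by (simp add: of_nat_poly)

lemma sum_const_poly: "(\<Sum>i\<in>S. [:g i:]) = ([:\<Sum>i\<in>S. g i:] :: 'a poly)"
  by (induction S rule: infinite_finite_induct) auto

lemma fact_comb: "m \<le> n \<Longrightarrow> (of_nat (n choose m) * (of_nat (fact (n - m)) * (of_nat (fact m) * X)) :: 'a) = of_nat (fact n) * X"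
proof -
  assume "m \<le> n"
  then have "fact m * fact (n - m) * (n choose m) = fact n" by (rule binomial_fact_lemma)
  then have "(of_nat (n choose m) * of_nat (fact (n - m)) * of_nat (fact m) :: 'a) = of_nat (fact n)"
    by (metis of_nat_mult mult.commute mult.left_commute)
  then show ?thesis by (simp add: mult.assoc[symmetric])
qed

theorem B_assoc:
  "(\<Sum>r\<le>n. B (n - r) (x + y + 2 * of_nat r) (B r x f y g) z h)
 = (\<Sum>r\<le>n. B (n - r) x f (y + z + 2 * of_nat r) (B r y g z h))"
proof -
  have L: "(\<Sum>m\<le>n. of_nat (n choose m) * M (n - m) (- x + - y - 2 * of_nat m) (M m (-x) [:f:] (-y) [:g:]) (-z) [:h:])
     = [:of_nat (fact n) * (\<Sum>r\<le>n. B (n - r) (x + y + 2 * of_nat r) (B r x f y g) z h):]"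
  proof -
    have "(\<Sum>m\<le>n. of_nat (n choose m) * M (n - m) (- x + - y - 2 * of_nat m) (M m (-x) [:f:] (-y) [:g:]) (-z) [:h:])
      = (\<Sum>m\<le>n. [:of_nat (fact n) * B (n - m) (x + y + 2 * of_nat m) (B m x f y g) z h:])"
    proof (intro sum.cong refl)
      fix m assume "m \<in> {..n}"
      then have mn: "m \<le> n" by simp
      have e: "- x + - y - 2 * of_nat m = - (x + y + 2 * of_nat m)" by simp
      show "of_nat (n choose m) * M (n - m) (- x + - y - 2 * of_nat m) (M m (-x) [:f:] (-y) [:g:]) (-z) [:h:]
        = [:of_nat (fact n) * B (n - m) (x + y + 2 * of_nat m) (B m x f y g) z h:]"
        unfolding e M_const const_mult_nat B_nat_left fact_comb[OF mn] ..
    qed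
    also have "\<dots> = [:of_nat (fact n) * (\<Sum>r\<le>n. B (n - r) (x + y + 2 * of_nat r) (B r x f y g) z h):]"
      by (simp add: sum_distrib_left sum_const_poly)
    finally show ?thesis .
  qed
  have R: "(\<Sum>m\<le>n. of_nat (n choose m) * M (n - m) (-x) [:f:] (- y + - z - 2 * of_nat m) (M m (-y) [:g:] (-z) [:h:]))
     = [:of_nat (fact n) * (\<Sum>r\<le>n. B (n - r) x f (y + z + 2 * of_nat r) (B r y g z h)):]"
  proof -
    have "(\<Sum>m\<le>n. of_nat (n choose m) * M (n - m) (-x) [:f:] (- y + - z - 2 * of_nat m) (M m (-y) [:g:] (-z) [:h:]))
      = (\<Sum>m\<le>n. [:of_nat (fact n) * B (n - m) x f (y + z + 2 * of_nat m) (B m y g z h):])"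
    proof (intro sum.cong refl)
      fix m assume "m \<in> {..n}"
      then have mn: "m \<le> n" by simp
      have e: "- y + - z - 2 * of_nat m = - (y + z + 2 * of_nat m)" by simp
      show "of_nat (n choose m) * M (n - m) (-x) [:f:] (- y + - z - 2 * of_nat m) (M m (-y) [:g:] (-z) [:h:])
        = [:of_nat (fact n) * B (n - m) x f (y + z + 2 * of_nat m) (B m y g z h):]"
        unfolding e M_const const_mult_nat B_nat_right fact_comb[OF mn] ..
    qed
    also have "\<dots> = [:of_nat (fact n) * (\<Sum>r\<le>n. B (n - r) x f (y + z + 2 * of_nat r) (B r y g z h)):]"
      by (simp add: sum_distrib_left sum_const_poly)
    finally show ?thesis .
  qed
  have "[:of_nat (fact n) * (\<Sum>r\<le>n. B (n - r) (x + y + 2 * of_nat r) (B r x f y g) z h):]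
      = [:of_nat (fact n) * (\<Sum>r\<le>n. B (n - r) x f (y + z + 2 * of_nat r) (B r y g z h)):]"
    using moyal_assoc[of n "-x" "-y" "[:f:]" "[:g:]" "-z" "[:h:]"] unfolding L R .
  then have eq: "of_nat (fact n) * (\<Sum>r\<le>n. B (n - r) (x + y + 2 * of_nat r) (B r x f y g) z h)
      = of_nat (fact n) * (\<Sum>r\<le>n. B (n - r) x f (y + z + 2 * of_nat r) (B r y g z h))"
    by simp
  have nz: "(of_nat (fact n) :: complex) \<noteq> 0" by simp
  have inv: "sc (1 / of_nat (fact n)) * of_nat (fact n) = 1"
    using sc_inv[OF nz] unfolding sc_of_nat .
  show ?thesis
    using arg_cong[OF eq, of "\<lambda>t. sc (1 / of_nat (fact n)) * t"]
    unfolding mult.assoc[symmetric] inv by simp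
qed

end




definition gpd :: "(mono \<Rightarrow> nat) \<Rightarrow> (mono \<Rightarrow> mono) \<Rightarrow> jac \<Rightarrow> jac" where
  "gpd sel dec f = (\<Sum>m\<in>Poly_Mapping.keys f. Poly_Mapping.single (dec m) (of_nat (sel m) * Poly_Mapping.lookup f m))"

lemma gpd_superset:
  assumes "finite S" "Poly_Mapping.keys f \<subseteq> S"
  shows "gpd sel dec f = (\<Sum>m\<in>S. Poly_Mapping.single (dec m) (of_nat (sel m) * Poly_Mapping.lookup f m))"
  unfolding gpd_def
  by (rule sum.mono_neutral_left[OF assms]) (auto simp: in_keys_iff)

lemma gpd_add: "gpd sel dec (f + g) = gpd sel dec f + gpd sel dec g"
proof -
  let ?S = "Poly_Mapping.keys f \<union> Poly_Mapping.keys g"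
  have "gpd sel dec (f + g) = (\<Sum>m\<in>?S. Poly_Mapping.single (dec m) (of_nat (sel m) * Poly_Mapping.lookup (f + g) m))"
    using keys_add[of f g] by (intro gpd_superset) auto
  also have "\<dots> = (\<Sum>m\<in>?S. Poly_Mapping.single (dec m) (of_nat (sel m) * Poly_Mapping.lookup f m))
     + (\<Sum>m\<in>?S. Poly_Mapping.single (dec m) (of_nat (sel m) * Poly_Mapping.lookup g m))"
    by (simp add: lookup_add algebra_simps single_add sum.distrib)
  also have "\<dots> = gpd sel dec f + gpd sel dec g"
    by (subst (1 2) gpd_superset[where S="?S"]) auto
  finally show ?thesis .
qed

lemma gpd_zero [simp]: "gpd sel dec 0 = 0"
  by (simp add: gpd_def)

lemma gpd_sum: "gpd sel dec (sum g I) = (\<Sum>i\<in>I. gpd sel dec (g i))"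
  by (induction I rule: infinite_finite_induct) (auto simp: gpd_add)

lemma gpd_single: "gpd sel dec (Poly_Mapping.single m c) = Poly_Mapping.single (dec m) (of_nat (sel m) * c)"
  by (cases "c = 0") (simp_all add: gpd_def)

lemma jac_expand: "f = (\<Sum>m\<in>Poly_Mapping.keys f. Poly_Mapping.single m (Poly_Mapping.lookup f m))"
  for f :: "'x \<Rightarrow>\<^sub>0 complex"
  by (rule poly_mapping_eqI) (simp add: lookup_sum lookup_single when_def in_keys_iff sum.delta' cong: if_cong)

lemma mult_expand: "f * g = (\<Sum>m\<in>Poly_Mapping.keys f. \<Sum>m'\<in>Poly_Mapping.keys g.
    Poly_Mapping.single (m + m') (Poly_Mapping.lookup f m * Poly_Mapping.lookup g m'))"
  for f g :: jac
proof -
  have "f * g = (\<Sum>m\<in>Poly_Mapping.keys f. Poly_Mapping.single m (Poly_Mapping.lookup f m)) *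
      (\<Sum>m'\<in>Poly_Mapping.keys g. Poly_Mapping.single m' (Poly_Mapping.lookup g m'))"
    by (subst (1) jac_expand[of f], subst (1) jac_expand[of g]) (rule refl)
  then show ?thesis by (simp add: sum_product mult_single)
qed

lemma gpd_mult:
  assumes sel_add: "\<And>m m'. sel (m + m') = sel m + sel m'"
    and dec_add: "\<And>m m'. sel m > 0 \<Longrightarrow> dec (m + m') = dec m + m'"
  shows "gpd sel dec (f * g) = gpd sel dec f * g + f * gpd sel dec g"
proof -
  have mono: "gpd sel dec (Poly_Mapping.single (m + m') (a * b)) =
      gpd sel dec (Poly_Mapping.single m a) * Poly_Mapping.single m' b
    + Poly_Mapping.single m a * gpd sel dec (Poly_Mapping.single m' b)" for m m' a b
  proof -
    have d1: "sel m > 0 \<Longrightarrow> dec (m + m') = dec m + m'" by (rule dec_add)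
    have d2: "sel m' > 0 \<Longrightarrow> dec (m + m') = m + dec m'"
      using dec_add[of m' m] by (simp add: add.commute)
    show ?thesis
    proof (cases "sel m = 0"; cases "sel m' = 0")
      assume "sel m = 0" "sel m' = 0" then show ?thesis by (simp add: gpd_single mult_single sel_add)
    next
      assume "sel m = 0" "sel m' \<noteq> 0" then show ?thesis by (simp add: gpd_single mult_single sel_add d2 mult.assoc mult.commute mult.left_commute)
    next
      assume "sel m \<noteq> 0" "sel m' = 0" then show ?thesis using add.commute[of m' "dec m"] by (simp add: gpd_single mult_single sel_add d1 mult.assoc mult.commute mult.left_commute)
    next
      assume "sel m \<noteq> 0" "sel m' \<noteq> 0"
      then have "dec m + m' = dec (m + m')" "m + dec m' = dec (m + m')"
        by (metis d1 neq0_conv, metis d2 neq0_conv)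
      then show ?thesis using add.commute[of m' "dec m"]
        by (simp add: gpd_single mult_single sel_add single_add[symmetric] distrib_right distrib_left mult.assoc mult.commute mult.left_commute)
    qed
  qed
  let ?a = "Poly_Mapping.lookup f" and ?b = "Poly_Mapping.lookup g"
  have "gpd sel dec (f * g) = (\<Sum>m\<in>Poly_Mapping.keys f. \<Sum>m'\<in>Poly_Mapping.keys g.
      gpd sel dec (Poly_Mapping.single m (?a m)) * Poly_Mapping.single m' (?b m')
    + Poly_Mapping.single m (?a m) * gpd sel dec (Poly_Mapping.single m' (?b m')))"
    by (simp only: mult_expand[of f g] gpd_sum mono)
  also have "\<dots> = (\<Sum>m\<in>Poly_Mapping.keys f. gpd sel dec (Poly_Mapping.single m (?a m)))
        * (\<Sum>m'\<in>Poly_Mapping.keys g. Poly_Mapping.single m' (?b m'))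
      + (\<Sum>m\<in>Poly_Mapping.keys f. Poly_Mapping.single m (?a m))
        * (\<Sum>m'\<in>Poly_Mapping.keys g. gpd sel dec (Poly_Mapping.single m' (?b m')))"
    by (simp only: sum.distrib sum_product)
  also have "\<dots> = gpd sel dec f * g + f * gpd sel dec g"
    by (simp only: gpd_sum[symmetric] jac_expand[symmetric])
  finally show ?thesis .
qed

definition sel4 :: "mono \<Rightarrow> nat" where "sel4 = (\<lambda>(i,j,k,l). i)"
definition dec4 :: "mono \<Rightarrow> mono" where "dec4 = (\<lambda>(i,j,k,l). (i - 1, j, k, l))"
definition sel6 :: "mono \<Rightarrow> nat" where "sel6 = (\<lambda>(i,j,k,l). j)"
definition dec6 :: "mono \<Rightarrow> mono" where "dec6 = (\<lambda>(i,j,k,l). (i, j - 1, k, l))"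
definition selA :: "mono \<Rightarrow> nat" where "selA = (\<lambda>(i,j,k,l). k)"
definition decA :: "mono \<Rightarrow> mono" where "decA = (\<lambda>(i,j,k,l). (i, j, k - 1, l))"
definition selB :: "mono \<Rightarrow> nat" where "selB = (\<lambda>(i,j,k,l). l)"
definition decB :: "mono \<Rightarrow> mono" where "decB = (\<lambda>(i,j,k,l). (i, j, k, l - 1))"

lemma pdE4_gpd: "pdE4 = gpd sel4 dec4"
  by (auto simp: pdE4_def gpd_def sel4_def dec4_def fun_eq_iff split: prod.splits intro!: sum.cong)
lemma pdE6_gpd: "pdE6 = gpd sel6 dec6"
  by (auto simp: pdE6_def gpd_def sel6_def dec6_def fun_eq_iff split: prod.splits intro!: sum.cong)
lemma pdA_gpd: "pdA = gpd selA decA"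
  by (auto simp: pdA_def gpd_def selA_def decA_def fun_eq_iff split: prod.splits intro!: sum.cong)
lemma pdB_gpd: "pdB = gpd selB decB"
  by (auto simp: pdB_def gpd_def selB_def decB_def fun_eq_iff split: prod.splits intro!: sum.cong)

lemma pdE4_mult: "pdE4 (f * g) = pdE4 f * g + f * pdE4 g"
  unfolding pdE4_gpd by (rule gpd_mult) (auto simp: sel4_def dec4_def split: prod.splits)
lemma pdE6_mult: "pdE6 (f * g) = pdE6 f * g + f * pdE6 g"
  unfolding pdE6_gpd by (rule gpd_mult) (auto simp: sel6_def dec6_def split: prod.splits)
lemma pdA_mult: "pdA (f * g) = pdA f * g + f * pdA g"
  unfolding pdA_gpd by (rule gpd_mult) (auto simp: selA_def decA_def split: prod.splits)
lemma pdB_mult: "pdB (f * g) = pdB f * g + f * pdB g"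
  unfolding pdB_gpd by (rule gpd_mult) (auto simp: selB_def decB_def split: prod.splits)

lemma cst_add: "cst (x + y) = cst x + cst y"
  by (simp add: cst_def single_add)
lemma cst_mult: "cst (x * y) = cst x * cst y"
  by (simp add: cst_def mult_single)
lemma cst_one: "cst 1 = 1"
  by (simp add: cst_def flip: zero_prod_def)
lemma cst_zero [simp]: "cst 0 = 0"
  by (simp add: cst_def)

lemma gpd_cst:
  assumes "sel (0,0,0,0) = 0"
  shows "gpd sel dec (cst c) = 0"
  using assms by (simp add: cst_def gpd_single)

lemma Sab_add: "Sab a b (f + g) = Sab a b f + Sab a b g"
  by (simp add: Sab_def pdE4_gpd pdE6_gpd pdA_gpd pdB_gpd gpd_add algebra_simps)

lemma Sab_mult: "Sab a b (f * g) = Sab a b f * g + f * Sab a b g"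
  by (simp add: Sab_def pdE4_mult pdE6_mult pdA_mult pdB_mult algebra_simps)

lemma Sab_cst: "Sab a b (cst c) = 0"
  by (simp add: Sab_def pdE4_gpd pdE6_gpd pdA_gpd pdB_gpd gpd_cst sel4_def sel6_def selA_def selB_def)

lemma dalg_J: "dalg cst (Sab a b)"
  by unfold_locales (simp_all add: cst_add cst_mult cst_one Sab_add Sab_mult Sab_cst)

lemma bhom_B: "bhom a b c n k p f l q g = dalg.B cst (Sab a b) n (of_int k + c * of_nat p) f (of_int l + c * of_nat q) g"
  by (simp add: bhom_def dalg.B_def[OF dalg_J])

section \<open>Homogeneity\<close>

lemma wt_add: "wt (m + m') = wt m + wt m'"
  by (cases m; cases m') auto
lemma idx_add: "idx (m + m') = idx m + idx m'"
  by (cases m; cases m') auto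

lemma Jhom_iff: "f \<in> Jhom k p \<longleftrightarrow> (\<forall>m\<in>Poly_Mapping.keys f. wt m = k \<and> idx m = p)"
  by (simp add: Jhom_def)

lemma Jhom_zero [simp]: "0 \<in> Jhom k p"
  by (simp add: Jhom_iff)

lemma Jhom_add: "f \<in> Jhom k p \<Longrightarrow> g \<in> Jhom k p \<Longrightarrow> f + g \<in> Jhom k p"
  using keys_add[of f g] unfolding Jhom_iff by blast

lemma Jhom_uminus: "f \<in> Jhom k p \<Longrightarrow> - f \<in> Jhom k p"
  unfolding Jhom_iff by simp

lemma Jhom_sum: "(\<And>i. i \<in> I \<Longrightarrow> g i \<in> Jhom k p) \<Longrightarrow> sum g I \<in> Jhom k p"
  by (induction I rule: infinite_finite_induct) (auto intro: Jhom_add)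

lemma Jhom_mult: "f \<in> Jhom k p \<Longrightarrow> g \<in> Jhom l q \<Longrightarrow> f * g \<in> Jhom (k + l) (p + q)"
  using keys_mult[of f g] unfolding Jhom_iff by (fastforce simp: wt_add idx_add)

lemma Jhom_cst: "cst c \<in> Jhom 0 0"
  by (simp add: Jhom_iff cst_def)

lemma Jhom_E4: "E4 \<in> Jhom 4 0" by (simp add: Jhom_iff E4_def)
lemma Jhom_E6: "E6 \<in> Jhom 6 0" by (simp add: Jhom_iff E6_def)
lemma Jhom_A: "Aj \<in> Jhom (-2) 1" by (simp add: Jhom_iff Aj_def)
lemma Jhom_B: "Bj \<in> Jhom 0 1" by (simp add: Jhom_iff Bj_def)

lemma Jhom_cases: "f \<in> Jhom k p \<Longrightarrow> k' = k \<Longrightarrow> p' = p \<Longrightarrow> f \<in> Jhom k' p'"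
  by simp

lemma keys_gpd: "Poly_Mapping.keys (gpd sel dec f) \<subseteq> dec ` {m \<in> Poly_Mapping.keys f. sel m > 0}"
proof
  fix x assume "x \<in> Poly_Mapping.keys (gpd sel dec f)"
  then have "x \<in> (\<Union>m\<in>Poly_Mapping.keys f. Poly_Mapping.keys (Poly_Mapping.single (dec m) (of_nat (sel m) * Poly_Mapping.lookup f m)))"
    unfolding gpd_def by (rule subsetD[OF keys_sum])
  then show "x \<in> dec ` {m \<in> Poly_Mapping.keys f. sel m > 0}"
    by (auto simp: in_keys_iff split: if_splits)
qed

lemma Jhom_pdE4: "f \<in> Jhom k p \<Longrightarrow> pdE4 f \<in> Jhom (k - 4) p"
  using keys_gpd[of sel4 dec4 f] unfolding pdE4_gpd Jhom_iff
  by (fastforce simp: sel4_def dec4_def split: prod.splits)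
lemma Jhom_pdE6: "f \<in> Jhom k p \<Longrightarrow> pdE6 f \<in> Jhom (k - 6) p"
  using keys_gpd[of sel6 dec6 f] unfolding pdE6_gpd Jhom_iff
  by (fastforce simp: sel6_def dec6_def split: prod.splits)
lemma Jhom_pdA: "f \<in> Jhom k p \<Longrightarrow> pdA f \<in> Jhom (k + 2) (p - 1)"
  using keys_gpd[of selA decA f] unfolding pdA_gpd Jhom_iff
  by (fastforce simp: selA_def decA_def split: prod.splits)
lemma Jhom_pdB: "f \<in> Jhom k p \<Longrightarrow> pdB f \<in> Jhom k (p - 1)"
  using keys_gpd[of selB decB f] unfolding pdB_gpd Jhom_iff
  by (fastforce simp: selB_def decB_def split: prod.splits)
lemma pdA_idx0: "f \<in> Jhom k 0 \<Longrightarrow> pdA f = 0"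
proof -
  assume f: "f \<in> Jhom k 0"
  have "Poly_Mapping.keys (pdA f) = {}"
    using keys_gpd[of selA decA f] f unfolding pdA_gpd Jhom_iff
    by (fastforce simp: selA_def decA_def split: prod.splits)
  then show ?thesis by simp
qed
lemma pdB_idx0: "f \<in> Jhom k 0 \<Longrightarrow> pdB f = 0"
proof -
  assume f: "f \<in> Jhom k 0"
  have "Poly_Mapping.keys (pdB f) = {}"
    using keys_gpd[of selB decB f] f unfolding pdB_gpd Jhom_iff
    by (fastforce simp: selB_def decB_def split: prod.splits)
  then show ?thesis by simp
qed

lemma Jhom_Sab: "f \<in> Jhom k p \<Longrightarrow> Sab a b f \<in> Jhom (k + 2) p"
proof -
  assume f: "f \<in> Jhom k p"
  have t1: "cst (-1/3) * E6 * pdE4 f \<in> Jhom (k + 2) p"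
    by (rule Jhom_cases[OF Jhom_mult[OF Jhom_mult[OF Jhom_cst Jhom_E6] Jhom_pdE4[OF f]]]) simp_all
  have t2: "cst (-1/2) * E4^2 * pdE6 f \<in> Jhom (k + 2) p"
    unfolding power2_eq_square
    by (rule Jhom_cases[OF Jhom_mult[OF Jhom_mult[OF Jhom_cst Jhom_mult[OF Jhom_E4 Jhom_E4]] Jhom_pdE6[OF f]]]) simp_all
  have t3: "cst a * Bj * pdA f \<in> Jhom (k + 2) p"
  proof (cases "p = 0")
    case True then show ?thesis using pdA_idx0 f by simp
  next
    case False
    then show ?thesis
      by (rule_tac Jhom_cases[OF Jhom_mult[OF Jhom_mult[OF Jhom_cst Jhom_B] Jhom_pdA[OF f]]]) simp_all
  qed
  have t4: "cst b * E4 * Aj * pdB f \<in> Jhom (k + 2) p"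
  proof (cases "p = 0")
    case True then show ?thesis using pdB_idx0 f by simp
  next
    case False
    then show ?thesis
      by (rule_tac Jhom_cases[OF Jhom_mult[OF Jhom_mult[OF Jhom_mult[OF Jhom_cst Jhom_E4] Jhom_A] Jhom_pdB[OF f]]]) simp_all
  qed
  show ?thesis
    unfolding Sab_def by (intro Jhom_add t1 t2 t3 t4)
qed

lemma Jhom_Sabn: "f \<in> Jhom k p \<Longrightarrow> (Sab a b ^^ r) f \<in> Jhom (k + 2 * int r) p"
  by (induction r) (auto dest: Jhom_Sab[of _ _ _ a b] simp: algebra_simps)

lemma lookup_comp: "Poly_Mapping.lookup (comp f k p) m = (if wt m = k \<and> idx m = p then Poly_Mapping.lookup f m else 0)"
proof -
  have "Poly_Mapping.lookup (comp f k p) m = (\<Sum>m'\<in>{m' \<in> Poly_Mapping.keys f. wt m' = k \<and> idx m' = p}.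
      (if m' = m then Poly_Mapping.lookup f m' else 0))"
    unfolding comp_def lookup_sum by (intro sum.cong refl) (simp add: lookup_single when_def)
  also have "\<dots> = (if wt m = k \<and> idx m = p then Poly_Mapping.lookup f m else 0)"
    by (simp add: sum.delta' in_keys_iff)
  finally show ?thesis .
qed

lemma comp_add: "comp (f + g) k p = comp f k p + comp g k p"
  by (rule poly_mapping_eqI) (simp add: lookup_comp lookup_add)
lemma comp_zero [simp]: "comp 0 k p = 0"
  by (rule poly_mapping_eqI) (simp add: lookup_comp)
lemma Jhom_comp: "comp f k p \<in> Jhom k p"
  unfolding Jhom_iff by (auto simp: in_keys_iff lookup_comp split: if_splits)
lemma comp_Jhom: "f \<in> Jhom k p \<Longrightarrow> comp f k p = f"
  unfolding Jhom_iff by (intro poly_mapping_eqI) (auto simp: lookup_comp in_keys_iff)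
lemma comp_notin: "(k, p) \<notin> degs f \<Longrightarrow> comp f k p = 0"
  unfolding degs_def by (intro poly_mapping_eqI) (auto simp: lookup_comp in_keys_iff)
lemma finite_degs [simp]: "finite (degs f)"
  by (simp add: degs_def)
lemma degs_Jhom: "f \<in> Jhom k p \<Longrightarrow> degs f \<subseteq> {(k, p)}"
  unfolding degs_def Jhom_iff by auto

lemma sum_comp: "f = (\<Sum>(k, p)\<in>degs f. comp f k p)"
proof (rule poly_mapping_eqI)
  fix m
  have "Poly_Mapping.lookup (\<Sum>(k, p)\<in>degs f. comp f k p) m
      = (\<Sum>d\<in>degs f. if d = (wt m, idx m) then Poly_Mapping.lookup f m else 0)"
    unfolding lookup_sum
  proof (intro sum.cong refl)
    fix d :: "int \<times> nat"
    show "Poly_Mapping.lookup (case d of (k, p) \<Rightarrow> comp f k p) m = (if d = (wt m, idx m) then Poly_Mapping.lookup f m else 0)"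
      by (cases d) (auto simp: lookup_comp)
  qed
  also have "\<dots> = Poly_Mapping.lookup f m"
    by (auto simp: sum.delta' degs_def in_keys_iff)
  finally show "Poly_Mapping.lookup f m = Poly_Mapping.lookup (\<Sum>(k, p)\<in>degs f. comp f k p) m" ..
qed

context dalg begin
lemma B_add_left: "B n x (f1 + f2) y g = B n x f1 y g + B n x f2 y g"
  by (simp add: B_def Dn_add algebra_simps sum.distrib)
lemma B_add_right: "B n x f y (g1 + g2) = B n x f y g1 + B n x f y g2"
  by (simp add: B_def Dn_add algebra_simps sum.distrib)
lemma B_zero_left [simp]: "B n x 0 y g = 0"
  by (simp add: B_def)
lemma B_zero_right [simp]: "B n x f y 0 = 0"
  by (simp add: B_def)
end

lemma bhom_zero_left [simp]: "bhom a b c n k p 0 l q g = 0"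
  by (simp add: bhom_B dalg.B_zero_left[OF dalg_J])
lemma bhom_zero_right [simp]: "bhom a b c n k p f l q 0 = 0"
  by (simp add: bhom_B dalg.B_zero_right[OF dalg_J])
lemma bhom_add_left: "bhom a b c n k p (f1 + f2) l q g = bhom a b c n k p f1 l q g + bhom a b c n k p f2 l q g"
  by (simp add: bhom_B dalg.B_add_left[OF dalg_J])
lemma bhom_add_right: "bhom a b c n k p f l q (g1 + g2) = bhom a b c n k p f l q g1 + bhom a b c n k p f l q g2"
  by (simp add: bhom_B dalg.B_add_right[OF dalg_J])

lemma bracket_superset:
  assumes "finite S" "degs f \<subseteq> S" "finite T" "degs g \<subseteq> T"
  shows "bracket a b c n f g = (\<Sum>(k, p)\<in>S. \<Sum>(l, q)\<in>T. bhom a b c n k p (comp f k p) l q (comp g l q))"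
proof -
  have "bracket a b c n f g = (\<Sum>(k, p)\<in>degs f. \<Sum>(l, q)\<in>T. bhom a b c n k p (comp f k p) l q (comp g l q))"
    unfolding bracket_def
  proof (intro sum.cong refl)
    fix d assume "d \<in> degs f"
    show "(case d of (k, p) \<Rightarrow> \<Sum>(l, q)\<in>degs g. bhom a b c n k p (comp f k p) l q (comp g l q))
        = (case d of (k, p) \<Rightarrow> \<Sum>(l, q)\<in>T. bhom a b c n k p (comp f k p) l q (comp g l q))"
      by (cases d) (auto intro!: sum.mono_neutral_left assms simp: comp_notin)
  qed
  also have "\<dots> = (\<Sum>(k, p)\<in>S. \<Sum>(l, q)\<in>T. bhom a b c n k p (comp f k p) l q (comp g l q))"
    by (intro sum.mono_neutral_left assms) (auto simp: comp_notin)
  finally show ?thesis .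
qed

lemma bracket_add_left: "bracket a b c n (f1 + f2) g = bracket a b c n f1 g + bracket a b c n f2 g"
proof -
  let ?S = "degs f1 \<union> degs f2 \<union> degs (f1 + f2)"
  show ?thesis
    by (subst (1 2 3) bracket_superset[where S="?S" and T="degs g"])
       (auto simp: comp_add bhom_add_left sum.distrib split_def)
qed

lemma bracket_add_right: "bracket a b c n f (g1 + g2) = bracket a b c n f g1 + bracket a b c n f g2"
proof -
  let ?T = "degs g1 \<union> degs g2 \<union> degs (g1 + g2)"
  show ?thesis
    by (subst (1 2 3) bracket_superset[where S="degs f" and T="?T"])
       (auto simp: comp_add bhom_add_right sum.distrib split_def)
qed

lemma bracket_zero_left [simp]: "bracket a b c n 0 g = 0"
  by (simp add: bracket_def degs_def)
lemma bracket_zero_right [simp]: "bracket a b c n f 0 = 0"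
  by (simp add: bracket_def degs_def)

lemma bracket_sum_left: "bracket a b c n (sum u I) g = (\<Sum>i\<in>I. bracket a b c n (u i) g)"
  by (induction I rule: infinite_finite_induct) (auto simp: bracket_add_left)
lemma bracket_sum_right: "bracket a b c n f (sum u I) = (\<Sum>i\<in>I. bracket a b c n f (u i))"
  by (induction I rule: infinite_finite_induct) (auto simp: bracket_add_right)

lemma bracket_hom:
  assumes "f \<in> Jhom k p" "g \<in> Jhom l q"
  shows "bracket a b c n f g = bhom a b c n k p f l q g"
  using bracket_superset[of "{(k,p)}" f "{(l,q)}" g a b c n] degs_Jhom[OF assms(1)] degs_Jhom[OF assms(2)]
  by (simp add: comp_Jhom assms)

section \<open>Associativity\<close>

lemma Jhom_cst_mult: "f \<in> Jhom k p \<Longrightarrow> cst z * f \<in> Jhom k p"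
  using Jhom_mult[OF Jhom_cst[of z]] by fastforce

lemma Jhom_bhom:
  assumes "f \<in> Jhom k p" "g \<in> Jhom l q"
  shows "bhom a b c n k p f l q g \<in> Jhom (k + l + 2 * int n) (p + q)"
  unfolding bhom_def
proof (rule Jhom_sum)
  fix r assume "r \<in> {0..n}"
  then have rn: "r \<le> n" by simp
  have "(Sab a b ^^ r) f * (Sab a b ^^ (n - r)) g \<in> Jhom (k + 2 * int r + (l + 2 * int (n - r))) (p + q)"
    by (rule Jhom_mult[OF Jhom_Sabn[OF assms(1)] Jhom_Sabn[OF assms(2)]])
  moreover have "k + 2 * int r + (l + 2 * int (n - r)) = k + l + 2 * int n"
    using rn by (simp add: of_nat_diff)
  ultimately show "cst ((- 1) ^ r * (of_int k + c * of_nat p + of_nat n - 1 gchoose (n - r)) *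
             (of_int l + c * of_nat q + of_nat n - 1 gchoose r)) *
        ((Sab a b ^^ r) f * (Sab a b ^^ (n - r)) g) \<in> Jhom (k + l + 2 * int n) (p + q)"
    by (intro Jhom_cst_mult) (simp add: ac_simps)
qed

lemma assoc_hom:
  assumes f: "f \<in> Jhom k p" and g: "g \<in> Jhom l q" and h: "h \<in> Jhom k' p'"
  shows "(\<Sum>r=0..n. bracket a b c (n - r) (bracket a b c r f g) h)
       = (\<Sum>r=0..n. bracket a b c (n - r) f (bracket a b c r g h))"
proof -
  define x where "x = of_int k + c * of_nat p"
  define y where "y = of_int l + c * of_nat q"
  define z where "z = of_int k' + c * of_nat p'"
  interpret J: dalg cst "Sab a b" by (rule dalg_J)
  have "(\<Sum>r=0..n. bracket a b c (n - r) (bracket a b c r f g) h)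
     = (\<Sum>r\<le>n. J.B (n - r) (x + y + 2 * of_nat r) (J.B r x f y g) z h)"
    unfolding atLeast0AtMost
  proof (intro sum.cong refl)
    fix r
    have b1: "bracket a b c r f g = bhom a b c r k p f l q g"
      by (rule bracket_hom[OF f g])
    have "bracket a b c (n - r) (bracket a b c r f g) h
        = bhom a b c (n - r) (k + l + 2 * int r) (p + q) (bhom a b c r k p f l q g) k' p' h"
      unfolding b1 by (rule bracket_hom[OF Jhom_bhom[OF f g] h])
    also have "\<dots> = J.B (n - r) (x + y + 2 * of_nat r) (J.B r x f y g) z h"
      unfolding bhom_B x_def y_def z_def by (simp add: algebra_simps)
    finally show "bracket a b c (n - r) (bracket a b c r f g) h = J.B (n - r) (x + y + 2 * of_nat r) (J.B r x f y g) z h" .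
  qed
  also have "\<dots> = (\<Sum>r\<le>n. J.B (n - r) x f (y + z + 2 * of_nat r) (J.B r y g z h))"
    by (rule J.B_assoc)
  also have "\<dots> = (\<Sum>r=0..n. bracket a b c (n - r) f (bracket a b c r g h))"
    unfolding atLeast0AtMost
  proof (intro sum.cong refl)
    fix r
    have b1: "bracket a b c r g h = bhom a b c r l q g k' p' h"
      by (rule bracket_hom[OF g h])
    have "bracket a b c (n - r) f (bracket a b c r g h)
        = bhom a b c (n - r) k p f (l + k' + 2 * int r) (q + p') (bhom a b c r l q g k' p' h)"
      unfolding b1 by (rule bracket_hom[OF f Jhom_bhom[OF g h]])
    also have "\<dots> = J.B (n - r) x f (y + z + 2 * of_nat r) (J.B r y g z h)"
      unfolding bhom_B x_def y_def z_def by (simp add: algebra_simps)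
    finally show "J.B (n - r) x f (y + z + 2 * of_nat r) (J.B r y g z h) = bracket a b c (n - r) f (bracket a b c r g h)" ..
  qed
  finally show ?thesis .
qed

definition LL :: "complex \<Rightarrow> complex \<Rightarrow> complex \<Rightarrow> nat \<Rightarrow> jac \<Rightarrow> jac \<Rightarrow> jac \<Rightarrow> jac" where
  "LL a b c n f g h = (\<Sum>r=0..n. bracket a b c (n - r) (bracket a b c r f g) h)"
definition RR :: "complex \<Rightarrow> complex \<Rightarrow> complex \<Rightarrow> nat \<Rightarrow> jac \<Rightarrow> jac \<Rightarrow> jac \<Rightarrow> jac" where
  "RR a b c n f g h = (\<Sum>r=0..n. bracket a b c (n - r) f (bracket a b c r g h))"

lemma LL_sum1: "LL a b c n (sum u I) g h = (\<Sum>i\<in>I. LL a b c n (u i) g h)"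
  unfolding LL_def bracket_sum_left by (rule sum.swap)
lemma LL_sum2: "LL a b c n f (sum u I) h = (\<Sum>i\<in>I. LL a b c n f (u i) h)"
  unfolding LL_def bracket_sum_left bracket_sum_right by (rule sum.swap)
lemma LL_sum3: "LL a b c n f g (sum u I) = (\<Sum>i\<in>I. LL a b c n f g (u i))"
  unfolding LL_def bracket_sum_right by (rule sum.swap)
lemma RR_sum1: "RR a b c n (sum u I) g h = (\<Sum>i\<in>I. RR a b c n (u i) g h)"
  unfolding RR_def bracket_sum_left by (rule sum.swap)
lemma RR_sum2: "RR a b c n f (sum u I) h = (\<Sum>i\<in>I. RR a b c n f (u i) h)"
  unfolding RR_def bracket_sum_left bracket_sum_right by (rule sum.swap)
lemma RR_sum3: "RR a b c n f g (sum u I) = (\<Sum>i\<in>I. RR a b c n f g (u i))"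
  unfolding RR_def bracket_sum_left bracket_sum_right by (rule sum.swap)

lemma sum_comp': "f = (\<Sum>d\<in>degs f. comp f (fst d) (snd d))"
  using sum_comp[of f] by (simp add: split_def)

lemma LL_RR_hom: "f \<in> Jhom k p \<Longrightarrow> g \<in> Jhom l q \<Longrightarrow> h \<in> Jhom k' p' \<Longrightarrow> LL a b c n f g h = RR a b c n f g h"
  unfolding LL_def RR_def by (rule assoc_hom)

lemma assoc_general: "LL a b c n f g h = RR a b c n f g h"
proof -
  have "LL a b c n f g h = (\<Sum>e'\<in>degs h. \<Sum>e\<in>degs g. \<Sum>d\<in>degs f.
      LL a b c n (comp f (fst d) (snd d)) (comp g (fst e) (snd e)) (comp h (fst e') (snd e')))"
    by (subst (1) sum_comp'[of f], subst (1) sum_comp'[of g], subst (1) sum_comp'[of h])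
       (simp only: LL_sum1 LL_sum2 LL_sum3)
  also have "\<dots> = (\<Sum>e'\<in>degs h. \<Sum>e\<in>degs g. \<Sum>d\<in>degs f.
      RR a b c n (comp f (fst d) (snd d)) (comp g (fst e) (snd e)) (comp h (fst e') (snd e')))"
    by (intro sum.cong refl LL_RR_hom; rule Jhom_comp)
  also have "\<dots> = RR a b c n f g h"
  proof -
    have "RR a b c n f g h = (\<Sum>e'\<in>degs h. \<Sum>e\<in>degs g. \<Sum>d\<in>degs f.
      RR a b c n (comp f (fst d) (snd d)) (comp g (fst e) (snd e)) (comp h (fst e') (snd e')))"
      by (subst (1) sum_comp'[of f], subst (1) sum_comp'[of g], subst (1) sum_comp'[of h])
         (simp only: RR_sum1 RR_sum2 RR_sum3)
    then show ?thesis by simp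
  qed
  finally show ?thesis .
qed

section \<open>Modular forms\<close>

lemma Mstar_iff: "f \<in> Mstar \<longleftrightarrow> (\<forall>m\<in>Poly_Mapping.keys f. idx m = 0)"
  unfolding Mstar_def by (auto split: prod.splits)

lemma Mstar_zero [simp]: "0 \<in> Mstar" by (simp add: Mstar_iff)
lemma Mstar_add: "f \<in> Mstar \<Longrightarrow> g \<in> Mstar \<Longrightarrow> f + g \<in> Mstar"
  using keys_add[of f g] unfolding Mstar_iff by blast
lemma Mstar_sum: "(\<And>i. i \<in> I \<Longrightarrow> g i \<in> Mstar) \<Longrightarrow> sum g I \<in> Mstar"
  by (induction I rule: infinite_finite_induct) (auto intro: Mstar_add)
lemma Mstar_mult: "f \<in> Mstar \<Longrightarrow> g \<in> Mstar \<Longrightarrow> f * g \<in> Mstar"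
  using keys_mult[of f g] unfolding Mstar_iff by (fastforce simp: idx_add)
lemma Mstar_cst: "cst c \<in> Mstar" by (simp add: Mstar_iff cst_def)
lemma Mstar_E4: "E4 \<in> Mstar" by (simp add: Mstar_iff E4_def)
lemma Mstar_E6: "E6 \<in> Mstar" by (simp add: Mstar_iff E6_def)
lemma Mstar_pdE4: "f \<in> Mstar \<Longrightarrow> pdE4 f \<in> Mstar"
  using keys_gpd[of sel4 dec4 f] unfolding pdE4_gpd Mstar_iff
  by (fastforce simp: sel4_def dec4_def split: prod.splits)
lemma Mstar_pdE6: "f \<in> Mstar \<Longrightarrow> pdE6 f \<in> Mstar"
  using keys_gpd[of sel6 dec6 f] unfolding pdE6_gpd Mstar_iff
  by (fastforce simp: sel6_def dec6_def split: prod.splits)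
lemma Mstar_pdA: "f \<in> Mstar \<Longrightarrow> pdA f = 0"
proof -
  assume f: "f \<in> Mstar"
  have "Poly_Mapping.keys (pdA f) = {}"
    using keys_gpd[of selA decA f] f unfolding pdA_gpd Mstar_iff
    by (fastforce simp: selA_def decA_def split: prod.splits)
  then show ?thesis by simp
qed
lemma Mstar_pdB: "f \<in> Mstar \<Longrightarrow> pdB f = 0"
proof -
  assume f: "f \<in> Mstar"
  have "Poly_Mapping.keys (pdB f) = {}"
    using keys_gpd[of selB decB f] f unfolding pdB_gpd Mstar_iff
    by (fastforce simp: selB_def decB_def split: prod.splits)
  then show ?thesis by simp
qed

lemma Mstar_serre: "f \<in> Mstar \<Longrightarrow> serre f \<in> Mstar"
  unfolding serre_def
  by (intro Mstar_add Mstar_mult Mstar_cst Mstar_E4 Mstar_E6 Mstar_pdE4 Mstar_pdE6)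
     (simp_all add: power2_eq_square Mstar_mult Mstar_E4)

lemma Sab_Mstar: "f \<in> Mstar \<Longrightarrow> Sab a b f = serre f"
  by (simp add: Sab_def serre_def Mstar_pdA Mstar_pdB)

lemma Sabn_Mstar: "f \<in> Mstar \<Longrightarrow> (Sab a b ^^ r) f = (serre ^^ r) f \<and> (serre ^^ r) f \<in> Mstar"
  by (induction r) (auto simp: Sab_Mstar Mstar_serre)

lemma Mstar_comp: "f \<in> Mstar \<Longrightarrow> comp f k p \<in> Mstar"
  unfolding Mstar_iff by (auto simp: in_keys_iff lookup_comp split: if_splits)

lemma Mstar_bhom: "f \<in> Mstar \<Longrightarrow> g \<in> Mstar \<Longrightarrow> bhom a b c n k p f l q g \<in> Mstar"
  unfolding bhom_def by (intro Mstar_sum Mstar_mult Mstar_cst) (simp_all add: Sabn_Mstar)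

lemma Mstar_bracket: "f \<in> Mstar \<Longrightarrow> g \<in> Mstar \<Longrightarrow> bracket a b c n f g \<in> Mstar"
  unfolding bracket_def
  by (auto simp: split_def intro!: Mstar_sum Mstar_bhom Mstar_comp)

lemma lookup_wcomp: "Poly_Mapping.lookup (wcomp f k) m = (if wt m = k then Poly_Mapping.lookup f m else 0)"
proof -
  have "Poly_Mapping.lookup (wcomp f k) m = (\<Sum>m'\<in>{m' \<in> Poly_Mapping.keys f. wt m' = k}.
      (if m' = m then Poly_Mapping.lookup f m' else 0))"
    unfolding wcomp_def lookup_sum by (intro sum.cong refl) (simp add: lookup_single when_def)
  also have "\<dots> = (if wt m = k then Poly_Mapping.lookup f m else 0)"
    by (simp add: sum.delta' in_keys_iff)
  finally show ?thesis .
qed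

lemma comp_wcomp: "f \<in> Mstar \<Longrightarrow> comp f k 0 = wcomp f k"
proof (rule poly_mapping_eqI)
  fix m assume f: "f \<in> Mstar"
  show "Poly_Mapping.lookup (comp f k 0) m = Poly_Mapping.lookup (wcomp f k) m"
  proof (cases "m \<in> Poly_Mapping.keys f")
    case True
    then have "idx m = 0" using f unfolding Mstar_iff by blast
    then show ?thesis by (simp add: lookup_comp lookup_wcomp)
  next
    case False
    then show ?thesis by (simp add: lookup_comp lookup_wcomp in_keys_iff)
  qed
qed

lemma Mstar_wcomp: "f \<in> Mstar \<Longrightarrow> wcomp f k \<in> Mstar"
  using comp_wcomp Mstar_comp by metis

lemma degs_Mstar: "f \<in> Mstar \<Longrightarrow> degs f = (\<lambda>k. (k, 0)) ` wts f"
  unfolding degs_def wts_def Mstar_iff by force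

lemma bhom_src: "f \<in> Mstar \<Longrightarrow> g \<in> Mstar \<Longrightarrow> bhom a b c n k 0 f l 0 g = src_hom n k f l g"
  unfolding bhom_def src_hom_def by (intro sum.cong refl) (simp add: Sabn_Mstar)

lemma bracket_SRC: "f \<in> Mstar \<Longrightarrow> g \<in> Mstar \<Longrightarrow> bracket a b c n f g = SRC n f g"
proof -
  assume f: "f \<in> Mstar" and g: "g \<in> Mstar"
  have inj: "inj_on (\<lambda>k. (k, 0::nat)) S" for S :: "int set" by (rule inj_onI) simp
  have "bracket a b c n f g = (\<Sum>k\<in>wts f. \<Sum>l\<in>wts g. bhom a b c n k 0 (comp f k 0) l 0 (comp g l 0))"
    unfolding bracket_def degs_Mstar[OF f] degs_Mstar[OF g] sum.reindex[OF inj] by simp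
  also have "\<dots> = SRC n f g"
    unfolding SRC_def
    by (intro sum.cong refl) (simp add: comp_wcomp f g bhom_src Mstar_wcomp)
  finally show ?thesis .
qed

lemma bracket_0: "bracket a b c 0 f g = f * g"
proof -
  have "bracket a b c 0 f g = (\<Sum>(k, p)\<in>degs f. \<Sum>(l, q)\<in>degs g. comp f k p * comp g l q)"
    unfolding bracket_def by (simp add: bhom_def cst_one split_def)
  also have "\<dots> = (\<Sum>(k, p)\<in>degs f. comp f k p) * (\<Sum>(l, q)\<in>degs g. comp g l q)"
    by (simp add: sum_product split_def)
  also have "\<dots> = f * g"
    using sum_comp[of f, symmetric] sum_comp[of g, symmetric] by simp
  finally show ?thesis .
qed

theorem theorem1:
  fixes a b c :: complex
  shows "formal_deformation (\<lambda>n. bracket a b c n)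
    \<and> (\<forall>k l :: int. \<forall>p q n :: nat. \<forall>f g. even k \<longrightarrow> even l \<longrightarrow>
          f \<in> Jhom k p \<longrightarrow> g \<in> Jhom l q \<longrightarrow>
          bracket a b c n f g \<in> Jhom (k + l + 2 * int n) (p + q))
    \<and> (\<forall>n f g. f \<in> Mstar \<longrightarrow> g \<in> Mstar \<longrightarrow>
          bracket a b c n f g \<in> Mstar \<and> bracket a b c n f g = SRC n f g)"
proof (intro conjI allI impI)
  show "formal_deformation (\<lambda>n. bracket a b c n)"
    unfolding formal_deformation_def
    using assoc_general[of a b c] by (simp add: bracket_0 LL_def RR_def)
next
  fix k l :: int and p q n :: nat and f g
  assume "f \<in> Jhom k p" "g \<in> Jhom l q"
  then show "bracket a b c n f g \<in> Jhom (k + l + 2 * int n) (p + q)"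
    by (simp add: bracket_hom Jhom_bhom)
next
  fix n f g assume "f \<in> Mstar" "g \<in> Mstar"
  then show "bracket a b c n f g \<in> Mstar" by (rule Mstar_bracket)
  show "bracket a b c n f g = SRC n f g" using \<open>f \<in> Mstar\<close> \<open>g \<in> Mstar\<close> by (rule bracket_SRC)
qed


end
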